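(* Let $X:\mathbb{N}\to\mathbf{Set}_*$ be a tower of pointed sets, $A$ an abelian group and $B\subseteq A$ a subgroup. Then there is a natural inclusion $H(X,B)\hookrightarrow H(X,A)$, and for every $n\ge1$ it restricts to an isomorphism $H(X,A[n])\cong H(X,A)[n]$. If moreover $X$ satisfies the Mittag-Leffler condition, then $H(X,A/B)\cong H(X,A)/H(X,B)$ naturally, and for every $n\ge1$ the inclusion $H(X,nA)\hookrightarrow H(X,A)$ gives an isomorphism $H(X,nA)\cong nH(X,A)$. The same statements hold with $G$ in place of $H$.
   Context: $\mathbb{N}$ is regarded as a category with a single morphism $n\to m$ whenever $n\ge m$. For a pointed set $Y$, $Y\wedge A:=\bigoplus_{Y\setminus\{*\}}A$ (finitely supported pointed maps $Y\to A$), functorial via $f_*(sv)=f(s)v$, where $sv$ is the element with value $v$ at $s$ ($*v=0$). $G(X,A):=\lim_\mathbb{N}(X\wedge A)$; $K(X,A)$ is the image of the injective natural map $\rho:(\lim_\mathbb{N}X)\wedge A\to G(X,A)$, $\rho(xv)(n)=x(n)v$; $H(X,A):=G(X,A)/K(X,A)$. $A[n]=\{a\in A:na=0\}$. $X$ satisfies the Mittag-Leffler condition if for every $n$ there is $s\ge n$ with $\mathrm{Im}(X(s)\to X(n))=\mathrm{Im}(X(r)\to X(n))$ for all $r\ge s$. *)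

theory Defs
  imports "HOL-Algebra.Algebra"
begin

definition tower :: "(nat \<Rightarrow> 'x set) \<Rightarrow> (nat \<Rightarrow> 'x) \<Rightarrow> (nat \<Rightarrow> 'x \<Rightarrow> 'x) \<Rightarrow> bool" where
  "tower T p f \<longleftrightarrow> (\<forall>n. p n \<in> T n \<and> f n ` T (Suc n) \<subseteq> T n \<and> f n (p (Suc n)) = p n)"

fun bond :: "(nat \<Rightarrow> 'x \<Rightarrow> 'x) \<Rightarrow> nat \<Rightarrow> nat \<Rightarrow> 'x \<Rightarrow> 'x" where
  "bond f n 0 = id"
| "bond f n (Suc k) = bond f n k \<circ> f (n + k)"

text \<open>bond f n k : T (n+k) -> T n\<close>

definition mittag_leffler :: "(nat \<Rightarrow> 'x set) \<Rightarrow> (nat \<Rightarrow> 'x \<Rightarrow> 'x) \<Rightarrow> bool" where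
  "mittag_leffler T f \<longleftrightarrow>
     (\<forall>n. \<exists>s\<ge>n. \<forall>r\<ge>s. bond f n (s - n) ` T s = bond f n (r - n) ` T r)"

text \<open>Y smash A: finitely supported pointed maps Y -> A (value 1 at the basepoint
  and, by convention, outside Y).\<close>

definition wedge :: "'y set \<Rightarrow> 'y \<Rightarrow> ('a, 'b) monoid_scheme \<Rightarrow> ('y \<Rightarrow> 'a) set" where
  "wedge Y pt A = {s. (\<forall>y. s y \<in> carrier A) \<and> (\<forall>y. y \<notin> Y - {pt} \<longrightarrow> s y = \<one>\<^bsub>A\<^esub>)
                     \<and> finite {y. s y \<noteq> \<one>\<^bsub>A\<^esub>}}"

definition push :: "('a, 'b) monoid_scheme \<Rightarrow> 'y set \<Rightarrow> 'y \<Rightarrow> 'z set \<Rightarrow> 'z \<Rightarrow> ('y \<Rightarrow> 'z)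
                     \<Rightarrow> ('y \<Rightarrow> 'a) \<Rightarrow> ('z \<Rightarrow> 'a)" where
  "push A Y pt Z pt' g s = (\<lambda>z. if z \<in> Z - {pt'}
       then finprod A s {y \<in> Y - {pt}. g y = z \<and> s y \<noteq> \<one>\<^bsub>A\<^esub>} else \<one>\<^bsub>A\<^esub>)"

text \<open>G(T,A) = lim (T smash A), as a group under pointwise multiplication.\<close>

definition Gcar :: "(nat \<Rightarrow> 'x set) \<Rightarrow> (nat \<Rightarrow> 'x) \<Rightarrow> (nat \<Rightarrow> 'x \<Rightarrow> 'x)
                    \<Rightarrow> ('a, 'b) monoid_scheme \<Rightarrow> (nat \<Rightarrow> 'x \<Rightarrow> 'a) set" where
  "Gcar T p f A = {g. \<forall>n. g n \<in> wedge (T n) (p n) A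
       \<and> push A (T (Suc n)) (p (Suc n)) (T n) (p n) (f n) (g (Suc n)) = g n}"

definition Ggrp :: "(nat \<Rightarrow> 'x set) \<Rightarrow> (nat \<Rightarrow> 'x) \<Rightarrow> (nat \<Rightarrow> 'x \<Rightarrow> 'x)
                    \<Rightarrow> ('a, 'b) monoid_scheme \<Rightarrow> (nat \<Rightarrow> 'x \<Rightarrow> 'a) monoid" where
  "Ggrp T p f A = \<lparr>carrier = Gcar T p f A,
       monoid.mult = (\<lambda>g h. \<lambda>n y. g n y \<otimes>\<^bsub>A\<^esub> h n y), one = (\<lambda>n y. \<one>\<^bsub>A\<^esub>)\<rparr>"

definition limcar :: "(nat \<Rightarrow> 'x set) \<Rightarrow> (nat \<Rightarrow> 'x \<Rightarrow> 'x) \<Rightarrow> (nat \<Rightarrow> 'x) set" where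
  "limcar T f = {x. \<forall>n. x n \<in> T n \<and> f n (x (Suc n)) = x n}"

text \<open>rho : (lim T) smash A -> G(T,A), rho(s)(n) = (pr_n)_* s; K(T,A) its image.\<close>

definition rho :: "(nat \<Rightarrow> 'x set) \<Rightarrow> (nat \<Rightarrow> 'x) \<Rightarrow> (nat \<Rightarrow> 'x \<Rightarrow> 'x)
                    \<Rightarrow> ('a, 'b) monoid_scheme \<Rightarrow> ((nat \<Rightarrow> 'x) \<Rightarrow> 'a) \<Rightarrow> (nat \<Rightarrow> 'x \<Rightarrow> 'a)" where
  "rho T p f A s = (\<lambda>n. push A (limcar T f) p (T n) (p n) (\<lambda>x. x n) s)"

definition Kset :: "(nat \<Rightarrow> 'x set) \<Rightarrow> (nat \<Rightarrow> 'x) \<Rightarrow> (nat \<Rightarrow> 'x \<Rightarrow> 'x)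
                    \<Rightarrow> ('a, 'b) monoid_scheme \<Rightarrow> (nat \<Rightarrow> 'x \<Rightarrow> 'a) set" where
  "Kset T p f A = rho T p f A ` wedge (limcar T f) p A"

definition Hgrp :: "(nat \<Rightarrow> 'x set) \<Rightarrow> (nat \<Rightarrow> 'x) \<Rightarrow> (nat \<Rightarrow> 'x \<Rightarrow> 'x)
                    \<Rightarrow> ('a, 'b) monoid_scheme \<Rightarrow> (nat \<Rightarrow> 'x \<Rightarrow> 'a) set monoid" where
  "Hgrp T p f A = Ggrp T p f A Mod Kset T p f A"

definition Gmap :: "('a \<Rightarrow> 'c) \<Rightarrow> (nat \<Rightarrow> 'x \<Rightarrow> 'a) \<Rightarrow> (nat \<Rightarrow> 'x \<Rightarrow> 'c)" where
  "Gmap \<phi> g = (\<lambda>n y. \<phi> (g n y))"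

definition Hmap :: "(nat \<Rightarrow> 'x set) \<Rightarrow> (nat \<Rightarrow> 'x) \<Rightarrow> (nat \<Rightarrow> 'x \<Rightarrow> 'x)
                    \<Rightarrow> ('c, 'd) monoid_scheme \<Rightarrow> ('a \<Rightarrow> 'c)
                    \<Rightarrow> (nat \<Rightarrow> 'x \<Rightarrow> 'a) set \<Rightarrow> (nat \<Rightarrow> 'x \<Rightarrow> 'c) set" where
  "Hmap T p f A' \<phi> c = Kset T p f A' <#>\<^bsub>Ggrp T p f A'\<^esub> (Gmap \<phi> ` c)"

text \<open>n-torsion A[n] and the subgroup nA (written multiplicatively).\<close>

definition torsion :: "('a, 'b) monoid_scheme \<Rightarrow> nat \<Rightarrow> 'a set" where
  "torsion A n = {a \<in> carrier A. a [^]\<^bsub>A\<^esub> n = \<one>\<^bsub>A\<^esub>}"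

definition npowers :: "('a, 'b) monoid_scheme \<Rightarrow> nat \<Rightarrow> 'a set" where
  "npowers A n = (\<lambda>a. a [^]\<^bsub>A\<^esub> n) ` carrier A"

end

theory Submission
  imports Defs
begin


lemma wedgeD:
  assumes "s \<in> wedge Y pt A"
  shows "\<And>y. s y \<in> carrier A" "\<And>y. y \<notin> Y - {pt} \<Longrightarrow> s y = \<one>\<^bsub>A\<^esub>"
    "finite {y. s y \<noteq> \<one>\<^bsub>A\<^esub>}"
  using assms unfolding wedge_def by auto

lemma wedgeI:
  assumes "\<And>y. s y \<in> carrier A" "\<And>y. y \<notin> Y - {pt} \<Longrightarrow> s y = \<one>\<^bsub>A\<^esub>"
    "finite {y. s y \<noteq> \<one>\<^bsub>A\<^esub>}"
  shows "s \<in> wedge Y pt A"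
  using assms unfolding wedge_def by auto

lemma wedge_supp: "s \<in> wedge Y pt A \<Longrightarrow> {y. s y \<noteq> \<one>\<^bsub>A\<^esub>} \<subseteq> Y - {pt}"
  unfolding wedge_def by auto

context comm_monoid begin

lemma wedge_mult:
  assumes "s \<in> wedge Y pt G" "t \<in> wedge Y pt G"
  shows "(\<lambda>y. s y \<otimes> t y) \<in> wedge Y pt G"
proof (rule wedgeI)
  show "finite {y. s y \<otimes> t y \<noteq> \<one>}"
    by (rule finite_subset[of _ "{y. s y \<noteq> \<one>} \<union> {y. t y \<noteq> \<one>}"])
       (use wedgeD[OF assms(1)] wedgeD[OF assms(2)] in auto)
qed (use wedgeD[OF assms(1)] wedgeD[OF assms(2)] in auto)

lemma wedge_one: "(\<lambda>y. \<one>) \<in> wedge Y pt G"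
  by (rule wedgeI) auto

lemma push_alt:
  assumes s: "s \<in> wedge Y pt G" and F: "finite F" "{y. s y \<noteq> \<one>} \<subseteq> F"
  shows "push G Y pt Z pt' g s z = (if z \<in> Z - {pt'} then finprod G s {y \<in> F. g y = z} else \<one>)"
proof (cases "z \<in> Z - {pt'}")
  case True
  have "finprod G s {y \<in> Y - {pt}. g y = z \<and> s y \<noteq> \<one>} = finprod G s {y \<in> F. g y = z}"
    by (rule finprod_mono_neutral_cong_left) (use s F in \<open>auto simp: wedge_def\<close>)
  then show ?thesis using True by (simp add: push_def)
qed (auto simp: push_def)

lemma push_supp:
  "{z. push G Y pt Z pt' g s z \<noteq> \<one>} \<subseteq> g ` {y. s y \<noteq> \<one>}"
proof
  fix z assume z: "z \<in> {z. push G Y pt Z pt' g s z \<noteq> \<one>}"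
  show "z \<in> g ` {y. s y \<noteq> \<one>}"
  proof (rule ccontr)
    assume "z \<notin> g ` {y. s y \<noteq> \<one>}"
    then have "{y \<in> Y - {pt}. g y = z \<and> s y \<noteq> \<one>} = {}" by auto
    then have "push G Y pt Z pt' g s z = \<one>"
      by (simp only: push_def finprod_empty if_cancel)
    then show False using z by simp
  qed
qed

lemma push_wedge:
  assumes s: "s \<in> wedge Y pt G"
  shows "push G Y pt Z pt' g s \<in> wedge Z pt' G"
proof (rule wedgeI)
  show "finite {z. push G Y pt Z pt' g s z \<noteq> \<one>}"
    by (rule finite_subset[OF push_supp]) (use wedgeD(3)[OF s] in auto)
  fix y
  show "push G Y pt Z pt' g s y \<in> carrier G"
    unfolding push_def using wedgeD(1)[OF s] by auto
  show "y \<notin> Z - {pt'} \<Longrightarrow> push G Y pt Z pt' g s y = \<one>"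
    unfolding push_def by auto
qed

lemma push_one: "push G Y pt Z pt' g (\<lambda>y. \<one>) = (\<lambda>z. \<one>)"
  unfolding push_def by auto

lemma push_mult:
  assumes s: "s \<in> wedge Y pt G" and t: "t \<in> wedge Y pt G"
  shows "push G Y pt Z pt' g (\<lambda>y. s y \<otimes> t y)
       = (\<lambda>z. push G Y pt Z pt' g s z \<otimes> push G Y pt Z pt' g t z)"
proof
  fix z
  define F where "F = {y. s y \<noteq> \<one>} \<union> {y. t y \<noteq> \<one>}"
  have F: "finite F" using wedgeD(3)[OF s] wedgeD(3)[OF t] by (simp add: F_def)
  have st: "(\<lambda>y. s y \<otimes> t y) \<in> wedge Y pt G" by (rule wedge_mult[OF s t])
  have "{y. s y \<otimes> t y \<noteq> \<one>} \<subseteq> F" by (auto simp: F_def)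
  note e1 = push_alt[OF st F this]
  have "{y. s y \<noteq> \<one>} \<subseteq> F" by (auto simp: F_def)
  note e2 = push_alt[OF s F this]
  have "{y. t y \<noteq> \<one>} \<subseteq> F" by (auto simp: F_def)
  note e3 = push_alt[OF t F this]
  show "push G Y pt Z pt' g (\<lambda>y. s y \<otimes> t y) z
       = push G Y pt Z pt' g s z \<otimes> push G Y pt Z pt' g t z"
    unfolding e1 e2 e3 using wedgeD(1)[OF s] wedgeD(1)[OF t]
    by (auto intro!: finprod_multf)
qed

lemma push_cong:
  assumes "\<And>y. y \<in> Y - {pt} \<Longrightarrow> g y = g' y"
  shows "push G Y pt Z pt' g s = push G Y pt Z pt' g' s"
proof -
  have "\<And>z. {y \<in> Y - {pt}. g y = z \<and> s y \<noteq> \<one>} = {y \<in> Y - {pt}. g' y = z \<and> s y \<noteq> \<one>}"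
    using assms by auto
  then show ?thesis unfolding push_def by (simp only:)
qed

lemma push_comp:
  assumes s: "s \<in> wedge Y pt G" and g1: "g1 ` (Y - {pt}) \<subseteq> Z" and g2: "g2 pt' = pt''"
  shows "push G Z pt' W pt'' g2 (push G Y pt Z pt' g1 s) = push G Y pt W pt'' (g2 \<circ> g1) s"
proof
  fix w
  define F where "F = {y. s y \<noteq> \<one>}"
  have F: "finite F" using wedgeD(3)[OF s] by (simp add: F_def)
  have FY: "F \<subseteq> Y - {pt}" using wedge_supp[OF s] by (simp add: F_def)
  define F' where "F' = g1 ` F"
  have F': "finite F'" using F by (simp add: F'_def)
  have ps: "push G Y pt Z pt' g1 s \<in> wedge Z pt' G" by (rule push_wedge[OF s])
  have sF': "{z. push G Y pt Z pt' g1 s z \<noteq> \<one>} \<subseteq> F'"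
    using push_supp by (simp add: F'_def F_def)
  note e1 = push_alt[OF ps F' sF', of W pt'' g2 w]
  have e2: "push G Y pt W pt'' (g2 \<circ> g1) s w = (if w \<in> W - {pt''} then finprod G s {y \<in> F. (g2 \<circ> g1) y = w} else \<one>)"
    by (rule push_alt[OF s F]) (simp add: F_def)
  have e3: "\<And>z. push G Y pt Z pt' g1 s z = (if z \<in> Z - {pt'} then finprod G s {y \<in> F. g1 y = z} else \<one>)"
    by (rule push_alt[OF s F]) (simp add: F_def)
  show "push G Z pt' W pt'' g2 (push G Y pt Z pt' g1 s) w = push G Y pt W pt'' (g2 \<circ> g1) s w"
  proof (cases "w \<in> W - {pt''}")
    case False then show ?thesis unfolding e1 e2 using False by auto
  next
    case True
    have cs: "\<And>y. s y \<in> carrier G" using wedgeD(1)[OF s] .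
    have "finprod G s {y \<in> F. (g2 \<circ> g1) y = w}
        = finprod G s (\<Union>z\<in>{z \<in> F'. g2 z = w}. {y \<in> F. g1 y = z})"
      by (rule arg_cong[where f="finprod G s"]) (auto simp: F'_def)
    also have "\<dots> = finprod G (\<lambda>z. finprod G s {y \<in> F. g1 y = z}) {z \<in> F'. g2 z = w}"
      by (rule finprod_UN_disjoint) (use F F' cs in \<open>auto simp: pairwise_def disjnt_def\<close>)
    also have "\<dots> = finprod G (push G Y pt Z pt' g1 s) {z \<in> F'. g2 z = w}"
    proof (rule finprod_cong')
      show "push G Y pt Z pt' g1 s \<in> {z \<in> F'. g2 z = w} \<rightarrow> carrier G"
        using wedgeD(1)[OF ps] by auto
      fix z assume z: "z \<in> {z \<in> F'. g2 z = w}"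
      then have "z \<in> Z" using g1 FY by (auto simp: F'_def)
      moreover have "z \<noteq> pt'" using z g2 True by auto
      ultimately show "finprod G s {y \<in> F. g1 y = z} = push G Y pt Z pt' g1 s z"
        unfolding e3 by simp
    qed simp
    finally show ?thesis unfolding e1 e2 using True by simp
  qed
qed

end

lemma hom_finprod_gen:
  assumes A0: "comm_group A" and A0': "comm_group A'" and h: "h \<in> hom A A'"
    and S: "finite S" and s: "s \<in> S \<rightarrow> carrier A"
  shows "h (finprod A s S) = finprod A' (\<lambda>y. h (s y)) S"
  using S s
proof (induction S rule: finite_induct)
  have A: "comm_monoid A" and A': "comm_monoid A'" using A0 A0' by (simp_all add: comm_group_def)
  case empty
  then show ?case using h A A' A0 A0' hom_one[OF h] by (simp add: comm_monoid.finprod_empty comm_group.axioms(2))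
next
  case (insert x F)
  have A: "comm_monoid A" and A': "comm_monoid A'" using A0 A0' by (simp_all add: comm_group_def)
  have sF: "s \<in> F \<rightarrow> carrier A" and sx: "s x \<in> carrier A" using insert by auto
  have "h (finprod A s (insert x F)) = h (s x \<otimes>\<^bsub>A\<^esub> finprod A s F)"
    using comm_monoid.finprod_insert[OF A insert(1,2) sF sx] by simp
  also have "\<dots> = h (s x) \<otimes>\<^bsub>A'\<^esub> h (finprod A s F)"
    using h sx comm_monoid.finprod_closed[OF A sF] by (simp add: hom_mult)
  also have "\<dots> = finprod A' (\<lambda>y. h (s y)) (insert x F)"
  proof -
    have hs: "(\<lambda>y. h (s y)) \<in> F \<rightarrow> carrier A'" using sF h by (auto simp: hom_def)
    have hx: "h (s x) \<in> carrier A'" using sx h by (auto simp: hom_def)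
    show ?thesis using comm_monoid.finprod_insert[OF A' insert(1,2) hs hx] insert.IH[OF sF] by simp
  qed
  finally show ?case .
qed

lemma push_hom:
  assumes A: "comm_group A" and A': "comm_group A'" and h: "h \<in> hom A A'"
    and s: "s \<in> wedge Y pt A"
  shows "(\<lambda>y. h (s y)) \<in> wedge Y pt A'"
    and "(\<lambda>z. h (push A Y pt Z pt' g s z)) = push A' Y pt Z pt' g (\<lambda>y. h (s y))"
proof -
  interpret gh: group_hom A A' h
    using A A' h by (simp add: group_hom_def group_hom_axioms_def comm_group.axioms(2))
  interpret A: comm_group A by (rule A)
  interpret A': comm_group A' by (rule A')
  have hc: "\<And>y. h (s y) \<in> carrier A'" using wedgeD(1)[OF s] by auto
  show hs: "(\<lambda>y. h (s y)) \<in> wedge Y pt A'"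
  proof (rule wedgeI)
    show "finite {y. h (s y) \<noteq> \<one>\<^bsub>A'\<^esub>}"
      by (rule finite_subset[OF _ wedgeD(3)[OF s]]) auto
  qed (use hc wedgeD(2)[OF s] in auto)
  define F where "F = {y. s y \<noteq> \<one>\<^bsub>A\<^esub>}"
  have F: "finite F" using wedgeD(3)[OF s] by (simp add: F_def)
  show "(\<lambda>z. h (push A Y pt Z pt' g s z)) = push A' Y pt Z pt' g (\<lambda>y. h (s y))"
  proof
    fix z
    have e1: "push A Y pt Z pt' g s z = (if z \<in> Z - {pt'} then finprod A s {y \<in> F. g y = z} else \<one>\<^bsub>A\<^esub>)"
      by (rule A.push_alt[OF s F]) (simp add: F_def)
    have e2: "push A' Y pt Z pt' g (\<lambda>y. h (s y)) z = (if z \<in> Z - {pt'} then finprod A' (\<lambda>y. h (s y)) {y \<in> F. g y = z} else \<one>\<^bsub>A'\<^esub>)"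
      by (rule A'.push_alt[OF hs F]) (auto simp: F_def)
    show "h (push A Y pt Z pt' g s z) = push A' Y pt Z pt' g (\<lambda>y. h (s y)) z"
      unfolding e1 e2 using hom_finprod_gen[OF A.comm_group_axioms A'.comm_group_axioms h, of "{y \<in> F. g y = z}" s]
        F wedgeD(1)[OF s] by auto
  qed
qed




lemma Ggrp_simps [simp]:
  "carrier (Ggrp T p f A) = Gcar T p f A"
  "g \<otimes>\<^bsub>Ggrp T p f A\<^esub> h = (\<lambda>n y. g n y \<otimes>\<^bsub>A\<^esub> h n y)"
  "\<one>\<^bsub>Ggrp T p f A\<^esub> = (\<lambda>n y. \<one>\<^bsub>A\<^esub>)"
  by (simp_all add: Ggrp_def)

lemma GcarD:
  assumes "g \<in> Gcar T p f A"
  shows "g n \<in> wedge (T n) (p n) A"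
    "push A (T (Suc n)) (p (Suc n)) (T n) (p n) (f n) (g (Suc n)) = g n"
  using assms by (auto simp: Gcar_def)

lemma GcarD2: "g \<in> Gcar T p f A \<Longrightarrow> g n y \<in> carrier A"
  using GcarD(1) wedgeD(1) by metis

lemma GcarI:
  assumes "\<And>n. g n \<in> wedge (T n) (p n) A"
    "\<And>n. push A (T (Suc n)) (p (Suc n)) (T n) (p n) (f n) (g (Suc n)) = g n"
  shows "g \<in> Gcar T p f A"
  using assms by (auto simp: Gcar_def)

context comm_group begin

lemma wedge_inv:
  assumes s: "s \<in> wedge Y pt G"
  shows "(\<lambda>y. inv (s y)) \<in> wedge Y pt G"
proof (rule wedgeI)
  show "finite {y. inv s y \<noteq> \<one>}"
    by (rule finite_subset[OF _ wedgeD(3)[OF s]]) auto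
qed (use wedgeD[OF s] in auto)

lemma push_inv:
  assumes s: "s \<in> wedge Y pt G"
  shows "push G Y pt Z pt' g (\<lambda>y. inv (s y)) = (\<lambda>z. inv (push G Y pt Z pt' g s z))"
proof
  fix z
  have "push G Y pt Z pt' g (\<lambda>y. inv (s y) \<otimes> s y) = push G Y pt Z pt' g (\<lambda>y. \<one>)"
    using wedgeD(1)[OF s] by simp
  then have "push G Y pt Z pt' g (\<lambda>y. inv (s y)) z \<otimes> push G Y pt Z pt' g s z = \<one>"
    unfolding push_mult[OF wedge_inv[OF s] s] push_one by meson
  then show "push G Y pt Z pt' g (\<lambda>y. inv (s y)) z = inv (push G Y pt Z pt' g s z)"
    using inv_equality wedgeD(1)[OF push_wedge[OF s]] wedgeD(1)[OF push_wedge[OF wedge_inv[OF s]]]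
    by metis
qed

lemma Ggrp_inv_mem:
  assumes g: "g \<in> Gcar T p f G"
  shows "(\<lambda>n y. inv (g n y)) \<in> Gcar T p f G"
proof (rule GcarI)
  fix n
  show "(\<lambda>y. inv g n y) \<in> wedge (T n) (p n) G" by (rule wedge_inv[OF GcarD(1)[OF g]])
  show "push G (T (Suc n)) (p (Suc n)) (T n) (p n) (f n) (\<lambda>y. inv g (Suc n) y) = (\<lambda>y. inv g n y)"
    unfolding push_inv[OF GcarD(1)[OF g]] GcarD(2)[OF g] ..
qed

lemma Ggrp_comm_group: "comm_group (Ggrp T p f G)"
proof (rule comm_groupI)
  fix x y assume x: "x \<in> carrier (Ggrp T p f G)" and y: "y \<in> carrier (Ggrp T p f G)"
  then have x': "x \<in> Gcar T p f G" and y': "y \<in> Gcar T p f G" by simp_all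
  show "x \<otimes>\<^bsub>Ggrp T p f G\<^esub> y \<in> carrier (Ggrp T p f G)"
  proof (simp, rule GcarI)
    fix n
    show "(\<lambda>ya. x n ya \<otimes> y n ya) \<in> wedge (T n) (p n) G"
      by (rule wedge_mult[OF GcarD(1)[OF x'] GcarD(1)[OF y']])
    show "push G (T (Suc n)) (p (Suc n)) (T n) (p n) (f n) (\<lambda>ya. x (Suc n) ya \<otimes> y (Suc n) ya) =
        (\<lambda>ya. x n ya \<otimes> y n ya)"
      unfolding push_mult[OF GcarD(1)[OF x'] GcarD(1)[OF y']] GcarD(2)[OF x'] GcarD(2)[OF y'] ..
  qed
  show "x \<otimes>\<^bsub>Ggrp T p f G\<^esub> y = y \<otimes>\<^bsub>Ggrp T p f G\<^esub> x"
    using GcarD2[OF x'] GcarD2[OF y'] by (auto simp: m_comm)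
next
  show "\<one>\<^bsub>Ggrp T p f G\<^esub> \<in> carrier (Ggrp T p f G)"
    by (simp, rule GcarI) (simp_all add: wedge_one push_one)
next
  fix x y z assume "x \<in> carrier (Ggrp T p f G)" "y \<in> carrier (Ggrp T p f G)" "z \<in> carrier (Ggrp T p f G)"
  then have "\<And>n a. x n a \<in> carrier G" "\<And>n a. y n a \<in> carrier G" "\<And>n a. z n a \<in> carrier G"
    using GcarD2 by (metis Ggrp_simps(1))+
  then show "x \<otimes>\<^bsub>Ggrp T p f G\<^esub> y \<otimes>\<^bsub>Ggrp T p f G\<^esub> z = x \<otimes>\<^bsub>Ggrp T p f G\<^esub> (y \<otimes>\<^bsub>Ggrp T p f G\<^esub> z)"
    by (simp add: m_assoc)
next
  fix x assume "x \<in> carrier (Ggrp T p f G)"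
  then have "\<And>n a. x n a \<in> carrier G" using GcarD2 by (metis Ggrp_simps(1))
  then show "\<one>\<^bsub>Ggrp T p f G\<^esub> \<otimes>\<^bsub>Ggrp T p f G\<^esub> x = x"
    by simp
next
  fix x assume x: "x \<in> carrier (Ggrp T p f G)"
  show "\<exists>y\<in>carrier (Ggrp T p f G). y \<otimes>\<^bsub>Ggrp T p f G\<^esub> x = \<one>\<^bsub>Ggrp T p f G\<^esub>"
  proof (rule bexI[of _ "\<lambda>n y. inv (x n y)"])
    have "\<And>n a. x n a \<in> carrier G" using x GcarD2 by (metis Ggrp_simps(1))
    then show "(\<lambda>n y. inv x n y) \<otimes>\<^bsub>Ggrp T p f G\<^esub> x = \<one>\<^bsub>Ggrp T p f G\<^esub>" by simp
  qed (use x Ggrp_inv_mem in auto)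
qed

lemma Ggrp_inv:
  assumes g: "g \<in> Gcar T p f G"
  shows "inv\<^bsub>Ggrp T p f G\<^esub> g = (\<lambda>n y. inv (g n y))"
proof -
  interpret GG: comm_group "Ggrp T p f G" by (rule Ggrp_comm_group)
  have "\<And>n a. g n a \<in> carrier G" using g GcarD2 by metis
  then show ?thesis
    by (intro GG.inv_equality) (use g Ggrp_inv_mem[OF g] in auto)
qed

lemma Ggrp_pow:
  "g [^]\<^bsub>Ggrp T p f G\<^esub> (k::nat) = (\<lambda>n y. g n y [^] k)"
  by (induction k) auto

end

lemma Gmap_hom:
  assumes A: "comm_group A" and A': "comm_group A'" and h: "h \<in> hom A A'"
  shows "Gmap h \<in> hom (Ggrp T p f A) (Ggrp T p f A')"
proof (rule homI)
  fix g assume "g \<in> carrier (Ggrp T p f A)"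
  then have g: "g \<in> Gcar T p f A" by simp
  show "Gmap h g \<in> carrier (Ggrp T p f A')"
  proof (simp, rule GcarI)
    fix n
    show "Gmap h g n \<in> wedge (T n) (p n) A'"
      unfolding Gmap_def by (rule push_hom(1)[OF A A' h GcarD(1)[OF g]])
    show "push A' (T (Suc n)) (p (Suc n)) (T n) (p n) (f n) (Gmap h g (Suc n)) = Gmap h g n"
      unfolding Gmap_def push_hom(2)[OF A A' h GcarD(1)[OF g], symmetric] GcarD(2)[OF g] ..
  qed
next
  fix x y assume "x \<in> carrier (Ggrp T p f A)" "y \<in> carrier (Ggrp T p f A)"
  then have "\<And>n a. x n a \<in> carrier A" "\<And>n a. y n a \<in> carrier A"
    using GcarD2 by (metis Ggrp_simps(1))+
  then show "Gmap h (x \<otimes>\<^bsub>Ggrp T p f A\<^esub> y) = Gmap h x \<otimes>\<^bsub>Ggrp T p f A'\<^esub> Gmap h y"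
    using h by (simp add: Gmap_def hom_mult)
qed

lemma limcar_p: "tower T p f \<Longrightarrow> p \<in> limcar T f"
  by (auto simp: tower_def limcar_def)

lemma limcarD: "x \<in> limcar T f \<Longrightarrow> x n \<in> T n"  "x \<in> limcar T f \<Longrightarrow> f n (x (Suc n)) = x n"
  by (auto simp: limcar_def)

context comm_group begin

lemma rho_Gcar:
  assumes tw: "tower T p f" and s: "s \<in> wedge (limcar T f) p G"
  shows "rho T p f G s \<in> Gcar T p f G"
proof (rule GcarI)
  fix n
  show "rho T p f G s n \<in> wedge (T n) (p n) G"
    unfolding rho_def by (rule push_wedge[OF s])
  have "push G (T (Suc n)) (p (Suc n)) (T n) (p n) (f n) (rho T p f G s (Suc n))
      = push G (limcar T f) p (T n) (p n) (f n \<circ> (\<lambda>x. x (Suc n))) s"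
    unfolding rho_def
    by (rule push_comp[OF s]) (use tw in \<open>auto simp: limcar_def tower_def\<close>)
  also have "\<dots> = push G (limcar T f) p (T n) (p n) (\<lambda>x. x n) s"
    by (rule push_cong) (auto simp: limcar_def)
  finally show "push G (T (Suc n)) (p (Suc n)) (T n) (p n) (f n) (rho T p f G s (Suc n)) = rho T p f G s n"
    unfolding rho_def .
qed

lemma rho_mult:
  assumes s: "s \<in> wedge (limcar T f) p G" and t: "t \<in> wedge (limcar T f) p G"
  shows "rho T p f G (\<lambda>y. s y \<otimes> t y) = rho T p f G s \<otimes>\<^bsub>Ggrp T p f G\<^esub> rho T p f G t"
  unfolding rho_def Ggrp_simps push_mult[OF s t] ..

lemma rho_one: "rho T p f G (\<lambda>y. \<one>) = \<one>\<^bsub>Ggrp T p f G\<^esub>"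
  unfolding rho_def Ggrp_simps push_one ..

lemma rho_inv:
  assumes tw: "tower T p f" and s: "s \<in> wedge (limcar T f) p G"
  shows "rho T p f G (\<lambda>y. inv (s y)) = inv\<^bsub>Ggrp T p f G\<^esub> (rho T p f G s)"
  unfolding Ggrp_inv[OF rho_Gcar[OF tw s]] unfolding rho_def push_inv[OF s] ..

lemma Kset_subgroup:
  assumes tw: "tower T p f"
  shows "subgroup (Kset T p f G) (Ggrp T p f G)"
proof -
  interpret GG: comm_group "Ggrp T p f G" by (rule Ggrp_comm_group)
  show ?thesis
  proof (rule GG.subgroupI)
    show "Kset T p f G \<subseteq> carrier (Ggrp T p f G)"
      using rho_Gcar[OF tw] by (auto simp: Kset_def)
    show "Kset T p f G \<noteq> {}" unfolding Kset_def using wedge_one[of "limcar T f" p] by blast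
    fix a assume "a \<in> Kset T p f G"
    then obtain s where s: "s \<in> wedge (limcar T f) p G" and a: "a = rho T p f G s"
      by (auto simp: Kset_def)
    show "inv\<^bsub>Ggrp T p f G\<^esub> a \<in> Kset T p f G"
      unfolding a rho_inv[OF tw s, symmetric] Kset_def using wedge_inv[OF s] by blast
    fix b assume "b \<in> Kset T p f G"
    then obtain t where t: "t \<in> wedge (limcar T f) p G" and b: "b = rho T p f G t"
      by (auto simp: Kset_def)
    show "a \<otimes>\<^bsub>Ggrp T p f G\<^esub> b \<in> Kset T p f G"
      unfolding a b rho_mult[OF s t, symmetric] Kset_def using wedge_mult[OF s t] by blast
  qed
qed

end

lemma rho_hom:
  assumes A: "comm_group A" and A': "comm_group A'" and h: "h \<in> hom A A'"
    and s: "s \<in> wedge (limcar T f) p A"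
  shows "Gmap h (rho T p f A s) = rho T p f A' (\<lambda>y. h (s y))"
  unfolding Gmap_def rho_def push_hom(2)[OF A A' h s, symmetric] ..

lemma limcar_sep:
  assumes x: "x \<in> limcar T f" and y: "y \<in> limcar T f" and xy: "x \<noteq> y"
  shows "eventually (\<lambda>m. x m \<noteq> y m) sequentially"
proof -
  obtain n where n: "x n \<noteq> y n" using xy by auto
  have "x (n + k) \<noteq> y (n + k)" for k
  proof (induction k)
    case 0 then show ?case using n by simp
  next
    case (Suc k)
    show ?case
    proof
      assume "x (n + Suc k) = y (n + Suc k)"
      then have "f (n + k) (x (Suc (n + k))) = f (n + k) (y (Suc (n + k)))" by simp
      then have "x (n + k) = y (n + k)" using limcarD(2)[OF x] limcarD(2)[OF y] by simp
      then show False using Suc by simp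
    qed
  qed
  then show ?thesis
    by (intro eventually_sequentiallyI[of n]) (metis le_add_diff_inverse)
qed

lemma (in comm_group) rho_detect:
  assumes tw: "tower T p f" and s: "s \<in> wedge (limcar T f) p G"
    and C1: "\<one> \<in> C" and R: "\<And>n z. rho T p f G s n z \<in> C"
  shows "s y \<in> C"
proof (cases "s y = \<one>")
  case True then show ?thesis using C1 by simp
next
  case False
  define F where "F = {y. s y \<noteq> \<one>}"
  have F: "finite F" using wedgeD(3)[OF s] by (simp add: F_def)
  have yF: "y \<in> F" using False by (simp add: F_def)
  have FL: "F \<subseteq> limcar T f - {p}" using wedge_supp[OF s] by (simp add: F_def)
  have "\<forall>x\<in>insert p F - {y}. eventually (\<lambda>m. x m \<noteq> y m) sequentially"
    using FL yF limcar_p[OF tw] by (auto intro!: limcar_sep)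
  then have "eventually (\<lambda>m. \<forall>x\<in>insert p F - {y}. x m \<noteq> y m) sequentially"
    by (intro eventually_ball_finite) (use F in auto)
  then obtain m where m: "\<forall>x\<in>insert p F - {y}. x m \<noteq> y m"
    by (auto simp: eventually_sequentially)
  have "y \<noteq> p" using FL yF by auto
  moreover have "y \<in> limcar T f" using FL yF by auto
  ultimately have ym: "y m \<in> T m - {p m}" using m FL yF limcarD(1)[of y T f m] by auto
  have set: "{x \<in> F. x m = y m} = {y}" using m yF by auto
  have "rho T p f G s m (y m) = finprod G s {x \<in> F. x m = y m}"
  proof -
    have "rho T p f G s m (y m) = (if y m \<in> T m - {p m} then finprod G s {x \<in> F. x m = y m} else \<one>)"
      unfolding rho_def by (rule push_alt[OF s F]) (simp add: F_def)
    then show ?thesis using ym by simp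
  qed
  also have "\<dots> = s y" unfolding set using wedgeD(1)[OF s] by simp
  finally have e: "rho T p f G s m (y m) = s y" .
  show ?thesis using R[of m "y m"] unfolding e .
qed

lemma lift_wedge:
  assumes A: "comm_group A" and A': "comm_group A'" and h: "h \<in> hom A A'"
    and sur: "h ` carrier A = carrier A'" and s': "s' \<in> wedge Y pt A'"
  shows "\<exists>s. s \<in> wedge Y pt A \<and> (\<lambda>y. h (s y)) = s' \<and> {y. s y \<noteq> \<one>\<^bsub>A\<^esub>} \<subseteq> {y. s' y \<noteq> \<one>\<^bsub>A'\<^esub>}"
proof -
  have h1: "h \<one>\<^bsub>A\<^esub> = \<one>\<^bsub>A'\<^esub>"
    using hom_one[OF h] A A' by (simp add: comm_group.axioms(2))
  have ex: "\<exists>a. a \<in> carrier A \<and> h a = s' y" for y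
    using wedgeD(1)[OF s'] sur by (metis imageE)
  define s where "s y = (if s' y \<noteq> \<one>\<^bsub>A'\<^esub> then (SOME a. a \<in> carrier A \<and> h a = s' y) else \<one>\<^bsub>A\<^esub>)" for y
  have s1: "s y \<in> carrier A \<and> h (s y) = s' y" for y
  proof (cases "s' y \<noteq> \<one>\<^bsub>A'\<^esub>")
    case True then show ?thesis unfolding s_def using someI_ex[OF ex[of y]] by simp
  next
    case False then show ?thesis unfolding s_def using h1 A
      by (simp add: comm_group.axioms(2) monoid.one_closed group.is_monoid)
  qed
  have supp: "{y. s y \<noteq> \<one>\<^bsub>A\<^esub>} \<subseteq> {y. s' y \<noteq> \<one>\<^bsub>A'\<^esub>}" unfolding s_def by auto
  have fin: "finite {y. s y \<noteq> \<one>\<^bsub>A\<^esub>}" by (rule finite_subset[OF supp wedgeD(3)[OF s']])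
  have out: "s y = \<one>\<^bsub>A\<^esub>" if "y \<notin> Y - {pt}" for y
    using wedgeD(2)[OF s' that] unfolding s_def by simp
  have sc: "s y \<in> carrier A" for y using s1 by blast
  have w: "s \<in> wedge Y pt A" by (rule wedgeI[OF sc out fin])
  have e: "(\<lambda>y. h (s y)) = s'"
  proof
    fix y show "h (s y) = s' y" using s1[of y] by (rule conjunct2)
  qed
  show ?thesis by (rule exI[of _ s]) (rule conjI[OF w conjI[OF e supp]])
qed

lemma sub_comm_group:
  assumes A: "comm_group A" and C: "subgroup C A"
  shows "comm_group (A\<lparr>carrier := C\<rparr>)"
proof -
  interpret A: comm_group A by (rule A)
  interpret AC: group "A\<lparr>carrier := C\<rparr>" by (rule subgroup.subgroup_is_group[OF C A.is_group])
  show ?thesis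
  proof (rule AC.group_comm_groupI)
    fix x y assume "x \<in> carrier (A\<lparr>carrier := C\<rparr>)" "y \<in> carrier (A\<lparr>carrier := C\<rparr>)"
    then have "x \<in> carrier A" "y \<in> carrier A" using subgroup.mem_carrier[OF C] by auto
    then show "x \<otimes>\<^bsub>A\<lparr>carrier := C\<rparr>\<^esub> y = y \<otimes>\<^bsub>A\<lparr>carrier := C\<rparr>\<^esub> x" using A.m_comm by simp
  qed
qed

lemma sub_hom: "subgroup C A \<Longrightarrow> id \<in> hom (A\<lparr>carrier := C\<rparr>) A"
  by (auto simp: hom_def dest: subgroup.mem_carrier)

lemma wedge_sub:
  assumes "subgroup C A"
  shows "wedge Y pt (A\<lparr>carrier := C\<rparr>) = {s \<in> wedge Y pt A. \<forall>y. s y \<in> C}"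
  using subgroup.subset[OF assms] by (auto simp: wedge_def)

lemma push_sub:
  assumes A: "comm_group A" and C: "subgroup C A" and s: "s \<in> wedge Y pt (A\<lparr>carrier := C\<rparr>)"
  shows "push (A\<lparr>carrier := C\<rparr>) Y pt Z pt' g s = push A Y pt Z pt' g s"
  using push_hom(2)[OF sub_comm_group[OF A C] A sub_hom[OF C] s, of Z pt' g] by simp

lemma Gcar_sub:
  assumes A: "comm_group A" and C: "subgroup C A"
  shows "Gcar T p f (A\<lparr>carrier := C\<rparr>) = {g \<in> Gcar T p f A. \<forall>n y. g n y \<in> C}"
proof safe
  fix g assume g: "g \<in> Gcar T p f (A\<lparr>carrier := C\<rparr>)"
  have w: "g n \<in> wedge (T n) (p n) (A\<lparr>carrier := C\<rparr>)" for n by (rule GcarD(1)[OF g])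
  show "g \<in> Gcar T p f A"
  proof (rule GcarI)
    fix n
    show "g n \<in> wedge (T n) (p n) A" using w[of n] unfolding wedge_sub[OF C] by simp
    show "push A (T (Suc n)) (p (Suc n)) (T n) (p n) (f n) (g (Suc n)) = g n"
      using GcarD(2)[OF g, of n] by (simp add: push_sub[OF A C w[of "Suc n"]])
  qed
  fix n y show "g n y \<in> C" using w[of n] unfolding wedge_sub[OF C] by simp
next
  fix g assume g: "g \<in> Gcar T p f A" and gC: "\<forall>n y. g n y \<in> C"
  have w: "g n \<in> wedge (T n) (p n) (A\<lparr>carrier := C\<rparr>)" for n
    unfolding wedge_sub[OF C] using GcarD(1)[OF g] gC by simp
  show "g \<in> Gcar T p f (A\<lparr>carrier := C\<rparr>)"
  proof (rule GcarI)
    fix n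
    show "g n \<in> wedge (T n) (p n) (A\<lparr>carrier := C\<rparr>)" by (rule w)
    show "push (A\<lparr>carrier := C\<rparr>) (T (Suc n)) (p (Suc n)) (T n) (p n) (f n) (g (Suc n)) = g n"
      using GcarD(2)[OF g, of n] by (simp add: push_sub[OF A C w[of "Suc n"]])
  qed
qed

lemma rho_sub:
  assumes A: "comm_group A" and C: "subgroup C A" and s: "s \<in> wedge (limcar T f) p (A\<lparr>carrier := C\<rparr>)"
  shows "rho T p f (A\<lparr>carrier := C\<rparr>) s = rho T p f A s"
  unfolding rho_def push_sub[OF A C s] ..

lemma Kset_sub:
  assumes tw: "tower T p f" and A: "comm_group A" and C: "subgroup C A"
  shows "Kset T p f (A\<lparr>carrier := C\<rparr>) = {k \<in> Kset T p f A. \<forall>n y. k n y \<in> C}"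
proof safe
  fix k assume "k \<in> Kset T p f (A\<lparr>carrier := C\<rparr>)"
  then obtain s where s: "s \<in> wedge (limcar T f) p (A\<lparr>carrier := C\<rparr>)" and k: "k = rho T p f (A\<lparr>carrier := C\<rparr>) s"
    by (auto simp: Kset_def)
  have sA: "s \<in> wedge (limcar T f) p A" using s unfolding wedge_sub[OF C] by simp
  show "k \<in> Kset T p f A" unfolding k rho_sub[OF A C s] Kset_def using sA by blast
  fix n y
  have kG: "k \<in> Gcar T p f (A\<lparr>carrier := C\<rparr>)" unfolding k by (rule comm_group.rho_Gcar[OF sub_comm_group[OF A C] tw s])
  show "k n y \<in> C" using GcarD2[OF kG, of n y] by simp
next
  fix k assume "k \<in> Kset T p f A" and kC: "\<forall>n y. k n y \<in> C"
  then obtain s where s: "s \<in> wedge (limcar T f) p A" and k: "k = rho T p f A s"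
    by (auto simp: Kset_def)
  have "s y \<in> C" for y
    by (rule comm_group.rho_detect[OF A tw s]) (use kC k C subgroup.one_closed in auto)
  then have sC: "s \<in> wedge (limcar T f) p (A\<lparr>carrier := C\<rparr>)" unfolding wedge_sub[OF C] using s by simp
  have "rho T p f (A\<lparr>carrier := C\<rparr>) s \<in> Kset T p f (A\<lparr>carrier := C\<rparr>)"
    unfolding Kset_def using sC by (rule imageI)
  then show "k \<in> Kset T p f (A\<lparr>carrier := C\<rparr>)"
    unfolding k rho_sub[OF A C sC] .
qed




lemma bond_Suc_left: "bond f n (Suc k) x = f n (bond f (Suc n) k x)"
  by (induction k arbitrary: x) simp_all

lemma bond_maps: "tower T p f \<Longrightarrow> x \<in> T (n + k) \<Longrightarrow> bond f n k x \<in> T n"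
proof (induction k arbitrary: x)
  case 0 then show ?case by simp
next
  case (Suc k)
  have "f (n + k) x \<in> T (n + k)" using Suc.prems by (auto simp: tower_def)
  then show ?case using Suc.IH[OF Suc.prems(1)] by simp
qed

lemma bond_pt: "tower T p f \<Longrightarrow> bond f n k (p (n + k)) = p n"
  by (induction k) (auto simp: tower_def)

context comm_group begin

lemma push_id:
  assumes s: "s \<in> wedge Y pt G"
  shows "push G Y pt Y pt (\<lambda>y. y) s = s"
proof
  fix z
  define F where "F = {y. s y \<noteq> \<one>}"
  have F: "finite F" using wedgeD(3)[OF s] by (simp add: F_def)
  have e: "push G Y pt Y pt (\<lambda>y. y) s z = (if z \<in> Y - {pt} then finprod G s {y \<in> F. y = z} else \<one>)"
    by (rule push_alt[OF s F]) (simp add: F_def)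
  show "push G Y pt Y pt (\<lambda>y. y) s z = s z"
  proof (cases "z \<in> F")
    case True
    then have "{y \<in> F. y = z} = {z}" by auto
    then show ?thesis unfolding e using True wedge_supp[OF s] wedgeD(1)[OF s] by (auto simp: F_def)
  next
    case False
    then have em: "{y \<in> F. y = z} = {}" by auto
    have "s z = \<one>" using False by (simp add: F_def)
    then show ?thesis unfolding e em by simp
  qed
qed

lemma push_bond:
  assumes tw: "tower T p f" and g: "g \<in> Gcar T p f G"
  shows "push G (T (n + k)) (p (n + k)) (T n) (p n) (bond f n k) (g (n + k)) = g n"
proof (induction k)
  case 0
  show ?case using push_id[OF GcarD(1)[OF g, of n]] by (simp add: id_def)
next
  case (Suc k)
  have "push G (T (n + Suc k)) (p (n + Suc k)) (T n) (p n) (bond f n (Suc k)) (g (n + Suc k))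
      = push G (T (Suc (n + k))) (p (Suc (n + k))) (T n) (p n) (bond f n k \<circ> f (n + k)) (g (Suc (n + k)))"
    by simp
  also have "\<dots> = push G (T (n + k)) (p (n + k)) (T n) (p n) (bond f n k)
       (push G (T (Suc (n + k))) (p (Suc (n + k))) (T (n + k)) (p (n + k)) (f (n + k)) (g (Suc (n + k))))"
    by (rule push_comp[OF GcarD(1)[OF g], symmetric]) (use tw bond_pt[OF tw] in \<open>auto simp: tower_def\<close>)
  also have "\<dots> = g n" unfolding GcarD(2)[OF g] by (rule Suc.IH)
  finally show ?case .
qed

end

definition snf :: "(nat \<Rightarrow> 'x set) \<Rightarrow> (nat \<Rightarrow> 'x \<Rightarrow> 'x) \<Rightarrow> nat \<Rightarrow> nat" where
  "snf T f n = (SOME s. s \<ge> n \<and> (\<forall>r\<ge>s. bond f n (s - n) ` T s = bond f n (r - n) ` T r))"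

definition Xf :: "(nat \<Rightarrow> 'x set) \<Rightarrow> (nat \<Rightarrow> 'x \<Rightarrow> 'x) \<Rightarrow> nat \<Rightarrow> 'x set" where
  "Xf T f n = bond f n (snf T f n - n) ` T (snf T f n)"

locale MLsetup =
  fixes T :: "nat \<Rightarrow> 'x set" and p f and A :: "('a, 'b) monoid_scheme"
    and A' :: "('c, 'd) monoid_scheme" and h
  assumes tw: "tower T p f" and ml: "mittag_leffler T f" and A: "comm_group A"
    and A': "comm_group A'" and h: "h \<in> hom A A'" and sur: "h ` carrier A = carrier A'"
begin


interpretation A: comm_group A by (rule A)
interpretation A': comm_group A' by (rule A')


lemma sn_prop: "snf T f n \<ge> n \<and> (\<forall>r\<ge>snf T f n. bond f n (snf T f n - n) ` T (snf T f n) = bond f n (r - n) ` T r)"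
proof -
  have "\<exists>s\<ge>n. \<forall>r\<ge>s. bond f n (s - n) ` T s = bond f n (r - n) ` T r"
    using ml by (auto simp: mittag_leffler_def)
  then show ?thesis unfolding snf_def by (rule someI_ex)
qed

lemma sn_ge: "snf T f n \<ge> n" using sn_prop by blast

lemma X_eq: "r \<ge> snf T f n \<Longrightarrow> Xf T f n = bond f n (r - n) ` T r"
  using sn_prop unfolding Xf_def by blast

lemma X_sub: "Xf T f n \<subseteq> T n"
proof -
  have "n + (snf T f n - n) = snf T f n" using sn_ge by simp
  then show ?thesis unfolding Xf_def using bond_maps[OF tw, of _ n "snf T f n - n"] by auto
qed

lemma X_f: "f n ` Xf T f (Suc n) \<subseteq> Xf T f n"
proof
  fix z assume "z \<in> f n ` Xf T f (Suc n)"
  define r where "r = max (snf T f n) (snf T f (Suc n))"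
  have r1: "r \<ge> snf T f n" and r2: "r \<ge> snf T f (Suc n)" by (simp_all add: r_def)
  have rn: "r \<ge> Suc n" using r2 sn_ge[of "Suc n"] by simp
  obtain y where y: "y \<in> Xf T f (Suc n)" and z: "z = f n y" using \<open>z \<in> _\<close> by auto
  obtain x where x: "x \<in> T r" and yx: "y = bond f (Suc n) (r - Suc n) x"
    using y X_eq[OF r2] by auto
  have "z = bond f n (Suc (r - Suc n)) x" unfolding z yx bond_Suc_left ..
  also have "Suc (r - Suc n) = r - n" using rn by simp
  finally show "z \<in> Xf T f n" using X_eq[OF r1] x by auto
qed

lemma X_surj: "z \<in> Xf T f n \<Longrightarrow> \<exists>y\<in>Xf T f (Suc n). f n y = z"
proof -
  assume "z \<in> Xf T f n"
  define r where "r = max (snf T f n) (snf T f (Suc n))"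
  have r1: "r \<ge> snf T f n" and r2: "r \<ge> snf T f (Suc n)" by (simp_all add: r_def)
  have rn: "r \<ge> Suc n" using r2 sn_ge[of "Suc n"] by simp
  obtain x where x: "x \<in> T r" and zx: "z = bond f n (r - n) x"
    using \<open>z \<in> Xf T f n\<close> X_eq[OF r1] by auto
  have rr: "r - n = Suc (r - Suc n)" using rn by simp
  have "z = f n (bond f (Suc n) (r - Suc n) x)" unfolding zx rr bond_Suc_left ..
  moreover have "bond f (Suc n) (r - Suc n) x \<in> Xf T f (Suc n)" using X_eq[OF r2] x by auto
  ultimately show ?thesis by blast
qed

lemma supp_X:
  assumes B: "comm_group B" and g: "g \<in> Gcar T p f B"
  shows "{y. g n y \<noteq> \<one>\<^bsub>B\<^esub>} \<subseteq> Xf T f n"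
proof -
  interpret B: comm_group B by (rule B)
  have nk: "n + (snf T f n - n) = snf T f n" using sn_ge by simp
  have "g n = push B (T (snf T f n)) (p (snf T f n)) (T n) (p n) (bond f n (snf T f n - n)) (g (snf T f n))"
    using B.push_bond[OF tw g, of n "snf T f n - n"] unfolding nk by simp
  then have "{y. g n y \<noteq> \<one>\<^bsub>B\<^esub>} \<subseteq> bond f n (snf T f n - n) ` {y. g (snf T f n) y \<noteq> \<one>\<^bsub>B\<^esub>}"
    using B.push_supp by metis
  also have "\<dots> \<subseteq> Xf T f n" unfolding Xf_def using wedge_supp[OF GcarD(1)[OF g, of "snf T f n"]] by auto
  finally show ?thesis .
qed

lemma step:
  assumes hg: "hg \<in> Gcar T p f A'" and a: "a \<in> wedge (T n) (p n) A"
    "{y. a y \<noteq> \<one>\<^bsub>A\<^esub>} \<subseteq> Xf T f n" "(\<lambda>y. h (a y)) = hg n"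
  shows "\<exists>a'. (a' \<in> wedge (T (Suc n)) (p (Suc n)) A \<and> {y. a' y \<noteq> \<one>\<^bsub>A\<^esub>} \<subseteq> Xf T f (Suc n)
              \<and> (\<lambda>y. h (a' y)) = hg (Suc n))
          \<and> push A (T (Suc n)) (p (Suc n)) (T n) (p n) (f n) a' = a"
proof -
  interpret gh: group_hom A A' h
    using A A' h by (simp add: group_hom_def group_hom_axioms_def comm_group.axioms(2))
  obtain c where c: "c \<in> wedge (T (Suc n)) (p (Suc n)) A" "(\<lambda>y. h (c y)) = hg (Suc n)"
      "{y. c y \<noteq> \<one>\<^bsub>A\<^esub>} \<subseteq> {y. hg (Suc n) y \<noteq> \<one>\<^bsub>A'\<^esub>}"
    using lift_wedge[OF A A' h sur GcarD(1)[OF hg]] by blast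
  have cX: "{y. c y \<noteq> \<one>\<^bsub>A\<^esub>} \<subseteq> Xf T f (Suc n)" using c(3) supp_X[OF A' hg] by blast
  define pc where "pc = push A (T (Suc n)) (p (Suc n)) (T n) (p n) (f n) c"
  have pc: "pc \<in> wedge (T n) (p n) A" unfolding pc_def by (rule A.push_wedge[OF c(1)])
  have "{z. pc z \<noteq> \<one>\<^bsub>A\<^esub>} \<subseteq> f n ` {y. c y \<noteq> \<one>\<^bsub>A\<^esub>}" unfolding pc_def by (rule A.push_supp)
  then have pcX: "{z. pc z \<noteq> \<one>\<^bsub>A\<^esub>} \<subseteq> Xf T f n" using cX X_f by blast
  have hpc: "h (pc z) = hg n z" for z
  proof -
    have "h (pc z) = push A' (T (Suc n)) (p (Suc n)) (T n) (p n) (f n) (\<lambda>y. h (c y)) z"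
      unfolding pc_def push_hom(2)[OF A A' h c(1), symmetric] ..
    then show ?thesis unfolding c(2) GcarD(2)[OF hg] .
  qed
  have ac: "\<And>z. a z \<in> carrier A" using wedgeD(1)[OF a(1)] .
  have pcc: "\<And>z. pc z \<in> carrier A" using wedgeD(1)[OF pc] .
  define d where "d = (\<lambda>z. a z \<otimes>\<^bsub>A\<^esub> inv\<^bsub>A\<^esub> (pc z))"
  have d: "d \<in> wedge (T n) (p n) A" unfolding d_def by (rule A.wedge_mult[OF a(1) A.wedge_inv[OF pc]])
  have dc: "\<And>z. d z \<in> carrier A" using wedgeD(1)[OF d] .
  have dX: "{z. d z \<noteq> \<one>\<^bsub>A\<^esub>} \<subseteq> Xf T f n"
  proof
    fix z assume "z \<in> {z. d z \<noteq> \<one>\<^bsub>A\<^esub>}"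
    then have "a z \<noteq> \<one>\<^bsub>A\<^esub> \<or> pc z \<noteq> \<one>\<^bsub>A\<^esub>" unfolding d_def by auto
    then show "z \<in> Xf T f n" using a(2) pcX by blast
  qed
  have hd: "h (d z) = \<one>\<^bsub>A'\<^esub>" for z
  proof -
    have "h (d z) = h (a z) \<otimes>\<^bsub>A'\<^esub> inv\<^bsub>A'\<^esub> (h (pc z))"
      unfolding d_def using ac pcc by simp
    also have "\<dots> = hg n z \<otimes>\<^bsub>A'\<^esub> inv\<^bsub>A'\<^esub> (hg n z)"
      unfolding hpc using fun_cong[OF a(3), of z] by simp
    also have "\<dots> = \<one>\<^bsub>A'\<^esub>" using GcarD2[OF hg] by simp
    finally show ?thesis .
  qed
  have "\<forall>z\<in>Xf T f n. \<exists>y\<in>Xf T f (Suc n). f n y = z" using X_surj by blast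
  then obtain \<sigma> where \<sigma>: "\<And>z. z \<in> Xf T f n \<Longrightarrow> \<sigma> z \<in> Xf T f (Suc n) \<and> f n (\<sigma> z) = z" by metis
  define D where "D = {z. d z \<noteq> \<one>\<^bsub>A\<^esub>}"
  have D: "finite D" using wedgeD(3)[OF d] by (simp add: D_def)
  have DT: "D \<subseteq> T n - {p n}" using wedge_supp[OF d] by (simp add: D_def)
  define e where "e y = (if y \<in> \<sigma> ` D then d (f n y) else \<one>\<^bsub>A\<^esub>)" for y
  have ec: "\<And>y. e y \<in> carrier A" using dc by (simp add: e_def)
  have eD: "{y. e y \<noteq> \<one>\<^bsub>A\<^esub>} \<subseteq> \<sigma> ` D" by (auto simp: e_def)
  have sD: "\<sigma> ` D \<subseteq> T (Suc n) - {p (Suc n)}"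
  proof
    fix y assume "y \<in> \<sigma> ` D"
    then obtain z where z: "z \<in> D" and y: "y = \<sigma> z" by auto
    have zX: "z \<in> Xf T f n" using z dX by (auto simp: D_def)
    have "y \<in> T (Suc n)" using \<sigma>[OF zX] X_sub y by auto
    moreover have "y \<noteq> p (Suc n)"
    proof
      assume "y = p (Suc n)"
      then have "z = p n" using \<sigma>[OF zX] y tw by (auto simp: tower_def)
      then show False using z DT by auto
    qed
    ultimately show "y \<in> T (Suc n) - {p (Suc n)}" by simp
  qed
  have e: "e \<in> wedge (T (Suc n)) (p (Suc n)) A"
  proof (rule wedgeI)
    show "finite {y. e y \<noteq> \<one>\<^bsub>A\<^esub>}" by (rule finite_subset[OF eD]) (use D in simp)
    fix y show "y \<notin> T (Suc n) - {p (Suc n)} \<Longrightarrow> e y = \<one>\<^bsub>A\<^esub>" using eD sD by blast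
  qed (rule ec)
  have eX: "{y. e y \<noteq> \<one>\<^bsub>A\<^esub>} \<subseteq> Xf T f (Suc n)" using eD \<sigma> dX by (auto simp: D_def)
  have he: "h (e y) = \<one>\<^bsub>A'\<^esub>" for y by (simp add: e_def hd)
  have pe: "push A (T (Suc n)) (p (Suc n)) (T n) (p n) (f n) e = d"
  proof
    fix z
    have fin: "finite (\<sigma> ` D)" using D by simp
    have eq: "push A (T (Suc n)) (p (Suc n)) (T n) (p n) (f n) e z
        = (if z \<in> T n - {p n} then finprod A e {y \<in> \<sigma> ` D. f n y = z} else \<one>\<^bsub>A\<^esub>)"
      by (rule A.push_alt[OF e fin eD])
    show "push A (T (Suc n)) (p (Suc n)) (T n) (p n) (f n) e z = d z"
    proof (cases "z \<in> D")
      case True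
      have zX: "z \<in> Xf T f n" using True dX by (auto simp: D_def)
      have set: "{y \<in> \<sigma> ` D. f n y = z} = {\<sigma> z}"
      proof (intro equalityI subsetI)
        fix y assume "y \<in> {y \<in> \<sigma> ` D. f n y = z}"
        then obtain z' where z': "z' \<in> D" "y = \<sigma> z'" "f n y = z" by auto
        have "z' \<in> Xf T f n" using z'(1) dX by (auto simp: D_def)
        then have "z' = z" using \<sigma> z' by metis
        then show "y \<in> {\<sigma> z}" using z' by simp
      next
        fix y assume "y \<in> {\<sigma> z}"
        then show "y \<in> {y \<in> \<sigma> ` D. f n y = z}" using True \<sigma>[OF zX] by auto
      qed
      have "e (\<sigma> z) = d z" using True \<sigma>[OF zX] by (simp add: e_def)
      moreover have "finprod A e {\<sigma> z} = e (\<sigma> z)"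
        using A.finprod_insert[of "{}" "\<sigma> z" e] ec by simp
      ultimately show ?thesis unfolding eq set using True DT by auto
    next
      case False
      have set: "{y \<in> \<sigma> ` D. f n y = z} = {}"
      proof (intro equalityI subsetI)
        fix y assume "y \<in> {y \<in> \<sigma> ` D. f n y = z}"
        then obtain z' where z': "z' \<in> D" "y = \<sigma> z'" "f n y = z" by auto
        have "z' \<in> Xf T f n" using z'(1) dX by (auto simp: D_def)
        then have "z' = z" using \<sigma> z' by metis
        then show "y \<in> {}" using z' False by simp
      qed simp
      have "d z = \<one>\<^bsub>A\<^esub>" using False by (simp add: D_def)
      then show ?thesis unfolding eq set by simp
    qed
  qed
  define a' where "a' = (\<lambda>y. c y \<otimes>\<^bsub>A\<^esub> e y)"
  have a'w: "a' \<in> wedge (T (Suc n)) (p (Suc n)) A" unfolding a'_def by (rule A.wedge_mult[OF c(1) e])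
  have a'X: "{y. a' y \<noteq> \<one>\<^bsub>A\<^esub>} \<subseteq> Xf T f (Suc n)"
  proof
    fix y assume "y \<in> {y. a' y \<noteq> \<one>\<^bsub>A\<^esub>}"
    then have "c y \<noteq> \<one>\<^bsub>A\<^esub> \<or> e y \<noteq> \<one>\<^bsub>A\<^esub>" unfolding a'_def by auto
    then show "y \<in> Xf T f (Suc n)" using cX eX by blast
  qed
  have cc: "\<And>y. c y \<in> carrier A" using wedgeD(1)[OF c(1)] .
  have ha': "(\<lambda>y. h (a' y)) = hg (Suc n)"
  proof
    fix y
    have "h (a' y) = h (c y) \<otimes>\<^bsub>A'\<^esub> h (e y)" unfolding a'_def using cc ec by simp
    also have "\<dots> = hg (Suc n) y" unfolding he using fun_cong[OF c(2), of y] GcarD2[OF hg] by simp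
    finally show "h (a' y) = hg (Suc n) y" .
  qed
  have pa': "push A (T (Suc n)) (p (Suc n)) (T n) (p n) (f n) a' = a"
  proof
    fix z
    have "push A (T (Suc n)) (p (Suc n)) (T n) (p n) (f n) a' z = pc z \<otimes>\<^bsub>A\<^esub> d z"
      unfolding a'_def A.push_mult[OF c(1) e] pe pc_def ..
    also have "\<dots> = a z" unfolding d_def
      using A.m_lcomm[OF pcc ac A.inv_closed[OF pcc]] ac pcc by simp
    finally show "push A (T (Suc n)) (p (Suc n)) (T n) (p n) (f n) a' z = a z" .
  qed
  show ?thesis by (rule exI[of _ a']) (intro conjI a'w a'X ha' pa')
qed

lemma Gsurj: "Gmap h ` Gcar T p f A = Gcar T p f A'"
proof
  show "Gmap h ` Gcar T p f A \<subseteq> Gcar T p f A'"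
    using Gmap_hom[OF A A' h, of T p f] by (auto simp: hom_def Pi_iff)
next
  show "Gcar T p f A' \<subseteq> Gmap h ` Gcar T p f A"
  proof
    fix hg assume hg: "hg \<in> Gcar T p f A'"
    define P where "P n a \<longleftrightarrow> a \<in> wedge (T n) (p n) A \<and> {y. a y \<noteq> \<one>\<^bsub>A\<^esub>} \<subseteq> Xf T f n \<and> (\<lambda>y. h (a y)) = hg n" for n a
    have base: "\<exists>a. P 0 a"
    proof -
      obtain c where c: "c \<in> wedge (T 0) (p 0) A" "(\<lambda>y. h (c y)) = hg 0"
          "{y. c y \<noteq> \<one>\<^bsub>A\<^esub>} \<subseteq> {y. hg 0 y \<noteq> \<one>\<^bsub>A'\<^esub>}"
        using lift_wedge[OF A A' h sur GcarD(1)[OF hg]] by blast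
      have "{y. c y \<noteq> \<one>\<^bsub>A\<^esub>} \<subseteq> Xf T f 0" using c(3) supp_X[OF A' hg, of 0] by blast
      then show ?thesis unfolding P_def by (intro exI[of _ c] conjI c(1,2))
    qed
    have stp: "\<exists>a'. P (Suc n) a' \<and> push A (T (Suc n)) (p (Suc n)) (T n) (p n) (f n) a' = a" if Pna: "P n a" for n a
    proof -
      obtain a' where a': "(a' \<in> wedge (T (Suc n)) (p (Suc n)) A \<and> {y. a' y \<noteq> \<one>\<^bsub>A\<^esub>} \<subseteq> Xf T f (Suc n)
              \<and> (\<lambda>y. h (a' y)) = hg (Suc n))
          \<and> push A (T (Suc n)) (p (Suc n)) (T n) (p n) (f n) a' = a"
        using step[OF hg, of a n] Pna unfolding P_def by blast
      show ?thesis unfolding P_def by (rule exI[of _ a']) (rule a')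
    qed
    define seq where "seq = rec_nat (SOME a. P 0 a)
        (\<lambda>n a. SOME a'. P (Suc n) a' \<and> push A (T (Suc n)) (p (Suc n)) (T n) (p n) (f n) a' = a)"
    have seq0: "seq 0 = (SOME a. P 0 a)" by (simp add: seq_def)
    have seqS: "seq (Suc n) = (SOME a'. P (Suc n) a' \<and> push A (T (Suc n)) (p (Suc n)) (T n) (p n) (f n) a' = seq n)" for n
      by (simp add: seq_def)
    have Pn: "P n (seq n)" for n
    proof (induction n)
      case 0 show ?case unfolding seq0 by (rule someI_ex[OF base])
    next
      case (Suc n) show ?case unfolding seqS using someI_ex[OF stp[OF Suc.IH]] by blast
    qed
    have pushn: "push A (T (Suc n)) (p (Suc n)) (T n) (p n) (f n) (seq (Suc n)) = seq n" for n
      unfolding seqS using someI_ex[OF stp[OF Pn[of n]]] by blast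
    have sG: "seq \<in> Gcar T p f A"
      by (rule GcarI) (use Pn pushn in \<open>auto simp: P_def\<close>)
    have "Gmap h seq = hg"
    proof (rule ext, rule ext)
      fix n y show "Gmap h seq n y = hg n y"
        using Pn[of n] unfolding P_def Gmap_def by (metis (mono_tags))
    qed
    then show "hg \<in> Gmap h ` Gcar T p f A" using sG by blast
  qed
qed

end




lemma (in group) rcos_eq_iff:
  assumes K: "subgroup K G" and a: "a \<in> carrier G" and b: "b \<in> carrier G"
  shows "K #> a = K #> b \<longleftrightarrow> a \<otimes> inv b \<in> K"
proof
  assume "K #> a = K #> b"
  then have "a \<in> K #> b" using rcos_self[OF a K] by simp
  then show "a \<otimes> inv b \<in> K" using subgroup.rcos_module_imp[OF K is_group b] by blast
next
  assume "a \<otimes> inv b \<in> K"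
  then have "a \<in> K #> b" using subgroup.rcos_module_rev[OF K is_group b a] by blast
  then show "K #> a = K #> b" using repr_independence[OF _ b K] by simp
qed

lemma (in group) rcos_eq_one_iff:
  assumes K: "subgroup K G" and a: "a \<in> carrier G"
  shows "K #> a = K \<longleftrightarrow> a \<in> K"
proof
  assume "K #> a = K"
  then show "a \<in> K" using rcos_self[OF a K] by simp
qed (use coset_join2[OF a K] in simp)

locale Fsetup =
  fixes G :: "('a, 'b) monoid_scheme" and G' :: "('c, 'd) monoid_scheme" and K K' h
  assumes G: "comm_group G" and G': "comm_group G'" and K: "subgroup K G" and K': "subgroup K' G'"
    and h: "h \<in> hom G G'" and hK: "h ` K \<subseteq> K'"
begin

interpretation G: comm_group G by (rule G)
interpretation G': comm_group G' by (rule G')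
interpretation gh: group_hom G G' h
  using G G' h by (simp add: group_hom_def group_hom_axioms_def comm_group.axioms(2))

lemma hc: "g \<in> carrier G \<Longrightarrow> h g \<in> carrier G'" by simp

lemma F_coset:
  assumes g: "g \<in> carrier G"
  shows "K' <#>\<^bsub>G'\<^esub> (h ` (K #>\<^bsub>G\<^esub> g)) = K' #>\<^bsub>G'\<^esub> h g"
proof (intro equalityI subsetI)
  fix x assume "x \<in> K' <#>\<^bsub>G'\<^esub> (h ` (K #>\<^bsub>G\<^esub> g))"
  then obtain k' k where k': "k' \<in> K'" and k: "k \<in> K" and x: "x = k' \<otimes>\<^bsub>G'\<^esub> h (k \<otimes>\<^bsub>G\<^esub> g)"
    by (auto simp: set_mult_def r_coset_def)
  have kc: "k \<in> carrier G" using k K subgroup.mem_carrier by metis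
  have k'c: "k' \<in> carrier G'" using k' K' subgroup.mem_carrier by metis
  have hk: "h k \<in> K'" using hK k by blast
  have "x = (k' \<otimes>\<^bsub>G'\<^esub> h k) \<otimes>\<^bsub>G'\<^esub> h g"
    unfolding x using kc k'c g by (simp add: G'.m_assoc)
  moreover have "k' \<otimes>\<^bsub>G'\<^esub> h k \<in> K'" using k' hk K' subgroup.m_closed by metis
  ultimately show "x \<in> K' #>\<^bsub>G'\<^esub> h g" by (auto simp: r_coset_def)
next
  fix x assume "x \<in> K' #>\<^bsub>G'\<^esub> h g"
  then obtain k' where k': "k' \<in> K'" and x: "x = k' \<otimes>\<^bsub>G'\<^esub> h g" by (auto simp: r_coset_def)
  have "\<one>\<^bsub>G\<^esub> \<in> K" using K subgroup.one_closed by metis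
  then have "h g \<in> h ` (K #>\<^bsub>G\<^esub> g)" using g by (force simp: r_coset_def)
  then show "x \<in> K' <#>\<^bsub>G'\<^esub> (h ` (K #>\<^bsub>G\<^esub> g))" unfolding set_mult_def using k' x by blast
qed

lemma F_hom: "(\<lambda>c. K' <#>\<^bsub>G'\<^esub> (h ` c)) \<in> hom (G Mod K) (G' Mod K')"
proof (rule homI)
  fix c assume "c \<in> carrier (G Mod K)"
  then obtain g where g: "g \<in> carrier G" and c: "c = K #>\<^bsub>G\<^esub> g" by (auto simp: carrier_FactGroup)
  show "K' <#>\<^bsub>G'\<^esub> (h ` c) \<in> carrier (G' Mod K')"
    unfolding c F_coset[OF g] carrier_FactGroup using g by auto
next
  fix c d assume "c \<in> carrier (G Mod K)" "d \<in> carrier (G Mod K)"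
  then obtain a b where a: "a \<in> carrier G" and c: "c = K #>\<^bsub>G\<^esub> a"
    and b: "b \<in> carrier G" and d: "d = K #>\<^bsub>G\<^esub> b" by (auto simp: carrier_FactGroup)
  have nK: "normal K G" using G.subgroup_imp_normal[OF K] .
  have nK': "normal K' G'" using G'.subgroup_imp_normal[OF K'] .
  have e: "c \<otimes>\<^bsub>G Mod K\<^esub> d = K #>\<^bsub>G\<^esub> (a \<otimes>\<^bsub>G\<^esub> b)"
    unfolding c d mult_FactGroup using normal.rcos_sum[OF nK a b] .
  have "K' <#>\<^bsub>G'\<^esub> (h ` (c \<otimes>\<^bsub>G Mod K\<^esub> d)) = K' #>\<^bsub>G'\<^esub> (h a \<otimes>\<^bsub>G'\<^esub> h b)"
    unfolding e F_coset[OF G.m_closed[OF a b]] using a b by simp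
  also have "\<dots> = (K' #>\<^bsub>G'\<^esub> h a) <#>\<^bsub>G'\<^esub> (K' #>\<^bsub>G'\<^esub> h b)"
    using normal.rcos_sum[OF nK' hc[OF a] hc[OF b]] by simp
  finally show "K' <#>\<^bsub>G'\<^esub> (h ` (c \<otimes>\<^bsub>G Mod K\<^esub> d)) =
       (K' <#>\<^bsub>G'\<^esub> (h ` c)) \<otimes>\<^bsub>G' Mod K'\<^esub> (K' <#>\<^bsub>G'\<^esub> (h ` d))"
    unfolding c d mult_FactGroup F_coset[OF a] F_coset[OF b] .
qed

lemma F_inj:
  assumes inj: "\<And>g. g \<in> carrier G \<Longrightarrow> h g \<in> K' \<Longrightarrow> g \<in> K"
  shows "inj_on (\<lambda>c. K' <#>\<^bsub>G'\<^esub> (h ` c)) (carrier (G Mod K))"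
proof (rule inj_onI)
  fix c d assume "c \<in> carrier (G Mod K)" "d \<in> carrier (G Mod K)"
  then obtain a b where a: "a \<in> carrier G" and c: "c = K #>\<^bsub>G\<^esub> a"
    and b: "b \<in> carrier G" and d: "d = K #>\<^bsub>G\<^esub> b" by (auto simp: carrier_FactGroup)
  assume "K' <#>\<^bsub>G'\<^esub> (h ` c) = K' <#>\<^bsub>G'\<^esub> (h ` d)"
  then have "K' #>\<^bsub>G'\<^esub> h a = K' #>\<^bsub>G'\<^esub> h b" unfolding c d F_coset[OF a] F_coset[OF b] .
  then have "h a \<otimes>\<^bsub>G'\<^esub> inv\<^bsub>G'\<^esub> h b \<in> K'" using G'.rcos_eq_iff[OF K' hc[OF a] hc[OF b]] by simp
  then have "h (a \<otimes>\<^bsub>G\<^esub> inv\<^bsub>G\<^esub> b) \<in> K'" using a b by simp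
  then have "a \<otimes>\<^bsub>G\<^esub> inv\<^bsub>G\<^esub> b \<in> K" using inj a b by simp
  then show "c = d" unfolding c d using G.rcos_eq_iff[OF K a b] by simp
qed

lemma F_image:
  "(\<lambda>c. K' <#>\<^bsub>G'\<^esub> (h ` c)) ` carrier (G Mod K) = (\<lambda>g. K' #>\<^bsub>G'\<^esub> h g) ` carrier G"
proof -
  have "(\<lambda>c. K' <#>\<^bsub>G'\<^esub> (h ` c)) ` carrier (G Mod K)
      = (\<lambda>c. K' <#>\<^bsub>G'\<^esub> (h ` c)) ` (\<lambda>g. K #>\<^bsub>G\<^esub> g) ` carrier G"
    by (simp add: carrier_FactGroup)
  also have "\<dots> = (\<lambda>g. K' #>\<^bsub>G'\<^esub> h g) ` carrier G"
    unfolding image_image using F_coset by (auto intro!: image_cong)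
  finally show ?thesis .
qed

end




declare Ggrp_simps[simp del]

lemma Gmap_id: "Gmap id = id"
  by (auto simp: Gmap_def fun_eq_iff)

lemma Hmap_eq: "Hmap T p f A' \<phi> = (\<lambda>c. Kset T p f A' <#>\<^bsub>Ggrp T p f A'\<^esub> (Gmap \<phi> ` c))"
  by (rule ext) (simp add: Hmap_def)

lemma torsion_subgroup:
  assumes A: "comm_group A" shows "subgroup (torsion A n) A"
proof -
  interpret A: comm_group A by (rule A)
  show ?thesis
  proof (rule A.subgroupI)
    show "torsion A n \<subseteq> carrier A" by (auto simp: torsion_def)
    show "torsion A n \<noteq> {}" unfolding torsion_def using A.one_closed A.nat_pow_one by blast
    fix a assume a: "a \<in> torsion A n"
    then show "inv\<^bsub>A\<^esub> a \<in> torsion A n" by (auto simp: torsion_def A.nat_pow_inv)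
    fix b assume b: "b \<in> torsion A n"
    show "a \<otimes>\<^bsub>A\<^esub> b \<in> torsion A n" using a b by (auto simp: torsion_def A.nat_pow_distrib)
  qed
qed

lemma npowers_subgroup:
  assumes A: "comm_group A" shows "subgroup (npowers A n) A"
proof -
  interpret A: comm_group A by (rule A)
  show ?thesis
  proof (rule A.subgroupI)
    show "npowers A n \<subseteq> carrier A" by (auto simp: npowers_def)
    have "\<one>\<^bsub>A\<^esub> [^]\<^bsub>A\<^esub> n \<in> npowers A n" unfolding npowers_def by (rule imageI) simp
    then show "npowers A n \<noteq> {}" by blast
    fix a assume "a \<in> npowers A n"
    then obtain x where x: "x \<in> carrier A" and a: "a = x [^]\<^bsub>A\<^esub> n" by (auto simp: npowers_def)
    have "inv\<^bsub>A\<^esub> a = (inv\<^bsub>A\<^esub> x) [^]\<^bsub>A\<^esub> n" unfolding a using x by (simp add: A.nat_pow_inv)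
    then show "inv\<^bsub>A\<^esub> a \<in> npowers A n" unfolding npowers_def using x by simp
    fix b assume "b \<in> npowers A n"
    then obtain y where y: "y \<in> carrier A" and b: "b = y [^]\<^bsub>A\<^esub> n" by (auto simp: npowers_def)
    have "a \<otimes>\<^bsub>A\<^esub> b = (x \<otimes>\<^bsub>A\<^esub> y) [^]\<^bsub>A\<^esub> n" unfolding a b using x y by (simp add: A.nat_pow_distrib)
    then show "a \<otimes>\<^bsub>A\<^esub> b \<in> npowers A n" unfolding npowers_def using x y by simp
  qed
qed

lemma pow_hom:
  assumes A: "comm_group A"
  shows "(\<lambda>a. a [^]\<^bsub>A\<^esub> n) \<in> hom A (A\<lparr>carrier := npowers A n\<rparr>)"
    and "(\<lambda>a. a [^]\<^bsub>A\<^esub> n) ` carrier A = carrier (A\<lparr>carrier := npowers A n\<rparr>)"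
proof -
  interpret A: comm_group A by (rule A)
  show "(\<lambda>a. a [^]\<^bsub>A\<^esub> n) \<in> hom A (A\<lparr>carrier := npowers A n\<rparr>)"
    by (rule homI) (auto simp: npowers_def A.nat_pow_distrib)
  show "(\<lambda>a. a [^]\<^bsub>A\<^esub> n) ` carrier A = carrier (A\<lparr>carrier := npowers A n\<rparr>)"
    by (simp add: npowers_def)
qed

locale Msetup =
  fixes T :: "nat \<Rightarrow> 'x set" and p f and A :: "('a, 'b) monoid_scheme"
  assumes tw: "tower T p f" and A: "comm_group A"
begin

interpretation A: comm_group A by (rule A)
interpretation GG: comm_group "Ggrp T p f A" by (rule A.Ggrp_comm_group)

lemma KA: "subgroup (Kset T p f A) (Ggrp T p f A)" by (rule A.Kset_subgroup[OF tw])
lemma nKA: "normal (Kset T p f A) (Ggrp T p f A)" using GG.subgroup_imp_normal[OF KA] .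

lemma Hcar: "carrier (Hgrp T p f A) = (\<lambda>g. Kset T p f A #>\<^bsub>Ggrp T p f A\<^esub> g) ` Gcar T p f A"
  by (simp add: Hgrp_def carrier_FactGroup Ggrp_simps(1))

lemma Hpow:
  assumes g: "g \<in> Gcar T p f A"
  shows "(Kset T p f A #>\<^bsub>Ggrp T p f A\<^esub> g) [^]\<^bsub>Hgrp T p f A\<^esub> (k::nat)
       = Kset T p f A #>\<^bsub>Ggrp T p f A\<^esub> (g [^]\<^bsub>Ggrp T p f A\<^esub> k)"
  unfolding Hgrp_def using normal.FactGroup_pow[OF nKA, of g k] g by (simp add: Ggrp_simps(1))

lemma coset_shift:
  assumes g: "g \<in> Gcar T p f A" and r: "r \<in> Kset T p f A"
  shows "Kset T p f A #>\<^bsub>Ggrp T p f A\<^esub> (g \<otimes>\<^bsub>Ggrp T p f A\<^esub> inv\<^bsub>Ggrp T p f A\<^esub> r)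
       = Kset T p f A #>\<^bsub>Ggrp T p f A\<^esub> g"
proof -
  have rc: "r \<in> carrier (Ggrp T p f A)" using r KA subgroup.mem_carrier by metis
  have gc: "g \<in> carrier (Ggrp T p f A)" using g by (simp add: Ggrp_simps(1))
  have "(g \<otimes>\<^bsub>Ggrp T p f A\<^esub> inv\<^bsub>Ggrp T p f A\<^esub> r) \<otimes>\<^bsub>Ggrp T p f A\<^esub> inv\<^bsub>Ggrp T p f A\<^esub> g
      = (inv\<^bsub>Ggrp T p f A\<^esub> r \<otimes>\<^bsub>Ggrp T p f A\<^esub> g) \<otimes>\<^bsub>Ggrp T p f A\<^esub> inv\<^bsub>Ggrp T p f A\<^esub> g"
    using rc gc by (simp add: GG.m_comm[of g "inv\<^bsub>Ggrp T p f A\<^esub> r"])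
  also have "\<dots> = inv\<^bsub>Ggrp T p f A\<^esub> r \<otimes>\<^bsub>Ggrp T p f A\<^esub> (g \<otimes>\<^bsub>Ggrp T p f A\<^esub> inv\<^bsub>Ggrp T p f A\<^esub> g)"
    by (rule GG.m_assoc) (simp_all add: rc gc)
  also have "\<dots> = inv\<^bsub>Ggrp T p f A\<^esub> r" using rc gc by simp
  finally have "(g \<otimes>\<^bsub>Ggrp T p f A\<^esub> inv\<^bsub>Ggrp T p f A\<^esub> r) \<otimes>\<^bsub>Ggrp T p f A\<^esub> inv\<^bsub>Ggrp T p f A\<^esub> g \<in> Kset T p f A"
    using subgroup.m_inv_closed[OF KA r] by simp
  then show ?thesis using GG.rcos_eq_iff[OF KA _ gc] rc gc by simp
qed

lemma Hsub:
  assumes C: "subgroup C A"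
  shows "Hmap T p f A id \<in> hom (Hgrp T p f (A\<lparr>carrier := C\<rparr>)) (Hgrp T p f A)"
    and "inj_on (Hmap T p f A id) (carrier (Hgrp T p f (A\<lparr>carrier := C\<rparr>)))"
    and "Hmap T p f A id ` carrier (Hgrp T p f (A\<lparr>carrier := C\<rparr>))
         = (\<lambda>g. Kset T p f A #>\<^bsub>Ggrp T p f A\<^esub> g) ` Gcar T p f (A\<lparr>carrier := C\<rparr>)"
proof -
  have AC: "comm_group (A\<lparr>carrier := C\<rparr>)" by (rule sub_comm_group[OF A C])
  have f1: "comm_group (Ggrp T p f (A\<lparr>carrier := C\<rparr>))" by (rule comm_group.Ggrp_comm_group[OF AC])
  have f2: "comm_group (Ggrp T p f A)" by (rule GG.comm_group_axioms)
  have f3: "subgroup (Kset T p f (A\<lparr>carrier := C\<rparr>)) (Ggrp T p f (A\<lparr>carrier := C\<rparr>))"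
    by (rule comm_group.Kset_subgroup[OF AC tw])
  have f5: "Gmap id \<in> hom (Ggrp T p f (A\<lparr>carrier := C\<rparr>)) (Ggrp T p f A)"
    by (rule Gmap_hom[OF AC A sub_hom[OF C]])
  have f6: "Gmap id ` Kset T p f (A\<lparr>carrier := C\<rparr>) \<subseteq> Kset T p f A"
    unfolding Gmap_id Kset_sub[OF tw A C] by auto
  interpret F: Fsetup "Ggrp T p f (A\<lparr>carrier := C\<rparr>)" "Ggrp T p f A" "Kset T p f (A\<lparr>carrier := C\<rparr>)"
      "Kset T p f A" "Gmap id"
    by (rule Fsetup.intro[OF f1 f2 f3 KA f5 f6])
  show "Hmap T p f A id \<in> hom (Hgrp T p f (A\<lparr>carrier := C\<rparr>)) (Hgrp T p f A)"
    unfolding Hmap_eq Hgrp_def by (rule F.F_hom)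
  show "inj_on (Hmap T p f A id) (carrier (Hgrp T p f (A\<lparr>carrier := C\<rparr>)))"
    unfolding Hmap_eq Hgrp_def
  proof (rule F.F_inj)
    fix g assume g: "g \<in> carrier (Ggrp T p f (A\<lparr>carrier := C\<rparr>))" and k: "Gmap id g \<in> Kset T p f A"
    have "g \<in> Gcar T p f A \<and> (\<forall>n y. g n y \<in> C)" using g unfolding Ggrp_simps Gcar_sub[OF A C] by simp
    then show "g \<in> Kset T p f (A\<lparr>carrier := C\<rparr>)" using k unfolding Gmap_id Kset_sub[OF tw A C] by simp
  qed
  show "Hmap T p f A id ` carrier (Hgrp T p f (A\<lparr>carrier := C\<rparr>))
         = (\<lambda>g. Kset T p f A #>\<^bsub>Ggrp T p f A\<^esub> g) ` Gcar T p f (A\<lparr>carrier := C\<rparr>)"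
    unfolding Hmap_eq Hgrp_def F.F_image by (simp add: Gmap_id Ggrp_simps(1))
qed

lemma Gtors: "Gcar T p f (A\<lparr>carrier := torsion A n\<rparr>) = torsion (Ggrp T p f A) n"
proof (intro equalityI subsetI)
  fix g assume "g \<in> Gcar T p f (A\<lparr>carrier := torsion A n\<rparr>)"
  then have g: "g \<in> Gcar T p f A" and gt: "\<forall>m y. g m y \<in> torsion A n"
    unfolding Gcar_sub[OF A torsion_subgroup[OF A]] by auto
  have "g [^]\<^bsub>Ggrp T p f A\<^esub> n = \<one>\<^bsub>Ggrp T p f A\<^esub>"
    using gt unfolding A.Ggrp_pow by (auto simp: torsion_def fun_eq_iff Ggrp_simps)
  then show "g \<in> torsion (Ggrp T p f A) n" using g by (simp add: torsion_def Ggrp_simps)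
next
  fix g assume "g \<in> torsion (Ggrp T p f A) n"
  then have g: "g \<in> Gcar T p f A" and gt: "(\<lambda>m y. g m y [^]\<^bsub>A\<^esub> n) = (\<lambda>m y. \<one>\<^bsub>A\<^esub>)"
    unfolding torsion_def A.Ggrp_pow Ggrp_simps by auto
  have "\<forall>m y. g m y \<in> torsion A n"
    using gt GcarD2[OF g] by (auto simp: torsion_def fun_eq_iff)
  then show "g \<in> Gcar T p f (A\<lparr>carrier := torsion A n\<rparr>)"
    unfolding Gcar_sub[OF A torsion_subgroup[OF A]] using g by simp
qed

lemma pow_Gmap: "(\<lambda>g. g [^]\<^bsub>Ggrp T p f A\<^esub> (n::nat)) = Gmap (\<lambda>a. a [^]\<^bsub>A\<^esub> n)"
  by (rule ext) (unfold A.Ggrp_pow Gmap_def, rule refl)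

lemma Htors:
  "Hmap T p f A id ` carrier (Hgrp T p f (A\<lparr>carrier := torsion A n\<rparr>)) = torsion (Hgrp T p f A) n"
  unfolding Hsub(3)[OF torsion_subgroup[OF A]] Gtors
proof (intro equalityI subsetI)
  fix c assume "c \<in> (\<lambda>g. Kset T p f A #>\<^bsub>Ggrp T p f A\<^esub> g) ` torsion (Ggrp T p f A) n"
  then obtain g where g: "g \<in> Gcar T p f A" and gn: "g [^]\<^bsub>Ggrp T p f A\<^esub> n = \<one>\<^bsub>Ggrp T p f A\<^esub>"
    and c: "c = Kset T p f A #>\<^bsub>Ggrp T p f A\<^esub> g" by (auto simp: torsion_def Ggrp_simps(1))
  have "c \<in> carrier (Hgrp T p f A)" unfolding Hcar c using g by blast
  moreover have "c [^]\<^bsub>Hgrp T p f A\<^esub> n = \<one>\<^bsub>Hgrp T p f A\<^esub>"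
    unfolding c Hpow[OF g] gn using subgroup.subset[OF KA] by (simp add: Hgrp_def)
  ultimately show "c \<in> torsion (Hgrp T p f A) n" by (simp add: torsion_def)
next
  fix c assume "c \<in> torsion (Hgrp T p f A) n"
  then have cc: "c \<in> carrier (Hgrp T p f A)" and cn: "c [^]\<^bsub>Hgrp T p f A\<^esub> n = \<one>\<^bsub>Hgrp T p f A\<^esub>"
    by (auto simp: torsion_def)
  obtain g where g: "g \<in> Gcar T p f A" and c: "c = Kset T p f A #>\<^bsub>Ggrp T p f A\<^esub> g"
    using cc unfolding Hcar by blast
  have gnc: "g [^]\<^bsub>Ggrp T p f A\<^esub> n \<in> carrier (Ggrp T p f A)" using GG.nat_pow_closed[of g n] g by (simp add: Ggrp_simps(1))
  have "Kset T p f A #>\<^bsub>Ggrp T p f A\<^esub> (g [^]\<^bsub>Ggrp T p f A\<^esub> n) = Kset T p f A"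
    using cn unfolding c Hpow[OF g] by (simp add: Hgrp_def)
  then have gnK: "g [^]\<^bsub>Ggrp T p f A\<^esub> n \<in> Kset T p f A" using GG.rcos_eq_one_iff[OF KA gnc] by simp
  then obtain s where s: "s \<in> wedge (limcar T f) p A" and gs: "g [^]\<^bsub>Ggrp T p f A\<^esub> n = rho T p f A s"
    by (auto simp: Kset_def)
  have NS: "subgroup (npowers A n) A" by (rule npowers_subgroup[OF A])
  have AN: "comm_group (A\<lparr>carrier := npowers A n\<rparr>)" by (rule sub_comm_group[OF A NS])
  have sy: "s y \<in> npowers A n" for y
  proof (rule A.rho_detect[OF tw s])
    show "\<one>\<^bsub>A\<^esub> \<in> npowers A n" using subgroup.one_closed[OF NS] by simp
    fix m z
    have "rho T p f A s m z = g m z [^]\<^bsub>A\<^esub> n" using fun_cong[OF fun_cong[OF gs[symmetric], of m], of z]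
      unfolding A.Ggrp_pow by simp
    then show "rho T p f A s m z \<in> npowers A n" unfolding npowers_def using GcarD2[OF g] by simp
  qed
  have sN: "s \<in> wedge (limcar T f) p (A\<lparr>carrier := npowers A n\<rparr>)"
    unfolding wedge_sub[OF NS] using s sy by simp
  obtain t where t: "t \<in> wedge (limcar T f) p A" and ts: "(\<lambda>y. t y [^]\<^bsub>A\<^esub> n) = s"
    using lift_wedge[OF A AN pow_hom(1)[OF A] pow_hom(2)[OF A] sN] by blast
  define r where "r = rho T p f A t"
  have rK: "r \<in> Kset T p f A" unfolding r_def Kset_def using t by (rule imageI)
  have rc: "r \<in> carrier (Ggrp T p f A)" using rK KA subgroup.mem_carrier by metis
  have "r [^]\<^bsub>Ggrp T p f A\<^esub> n = Gmap (\<lambda>a. a [^]\<^bsub>A\<^esub> n) r"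
    using fun_cong[OF pow_Gmap, of r] .
  also have "\<dots> = rho T p f (A\<lparr>carrier := npowers A n\<rparr>) s"
    unfolding r_def rho_hom[OF A AN pow_hom(1)[OF A] t] ts ..
  also have "\<dots> = g [^]\<^bsub>Ggrp T p f A\<^esub> n" unfolding rho_sub[OF A NS sN] gs ..
  finally have rg: "r [^]\<^bsub>Ggrp T p f A\<^esub> n = g [^]\<^bsub>Ggrp T p f A\<^esub> n" .
  define g' where "g' = g \<otimes>\<^bsub>Ggrp T p f A\<^esub> inv\<^bsub>Ggrp T p f A\<^esub> r"
  have gc: "g \<in> carrier (Ggrp T p f A)" using g by (simp add: Ggrp_simps(1))
  have g'c: "g' \<in> carrier (Ggrp T p f A)" unfolding g'_def using gc rc by simp
  have "g' [^]\<^bsub>Ggrp T p f A\<^esub> n = g [^]\<^bsub>Ggrp T p f A\<^esub> n \<otimes>\<^bsub>Ggrp T p f A\<^esub> inv\<^bsub>Ggrp T p f A\<^esub> (r [^]\<^bsub>Ggrp T p f A\<^esub> n)"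
    unfolding g'_def using gc rc by (simp add: GG.nat_pow_distrib GG.nat_pow_inv)
  also have "\<dots> = \<one>\<^bsub>Ggrp T p f A\<^esub>" unfolding rg using gnc by simp
  finally have g'n: "g' [^]\<^bsub>Ggrp T p f A\<^esub> n = \<one>\<^bsub>Ggrp T p f A\<^esub>" .
  have "c = Kset T p f A #>\<^bsub>Ggrp T p f A\<^esub> g'" unfolding c g'_def coset_shift[OF g rK] ..
  moreover have "g' \<in> torsion (Ggrp T p f A) n" using g'c g'n by (simp add: torsion_def)
  ultimately show "c \<in> (\<lambda>g. Kset T p f A #>\<^bsub>Ggrp T p f A\<^esub> g) ` torsion (Ggrp T p f A) n" by blast
qed

lemma MLpow: "mittag_leffler T f \<Longrightarrow> MLsetup T p f A (A\<lparr>carrier := npowers A n\<rparr>) (\<lambda>a. a [^]\<^bsub>A\<^esub> n)"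
  by (rule MLsetup.intro[OF tw _ A sub_comm_group[OF A npowers_subgroup[OF A]] pow_hom(1)[OF A] pow_hom(2)[OF A]])

lemma Gnpow:
  assumes ml: "mittag_leffler T f"
  shows "Gcar T p f (A\<lparr>carrier := npowers A n\<rparr>) = npowers (Ggrp T p f A) n"
proof -
  have "npowers (Ggrp T p f A) n = Gmap (\<lambda>a. a [^]\<^bsub>A\<^esub> n) ` Gcar T p f A"
    unfolding npowers_def[of "Ggrp T p f A"] pow_Gmap Ggrp_simps(1) ..
  then show ?thesis using MLsetup.Gsurj[OF MLpow[OF ml, of n]] by simp
qed

lemma Hnpow:
  assumes ml: "mittag_leffler T f"
  shows "Hmap T p f A id ` carrier (Hgrp T p f (A\<lparr>carrier := npowers A n\<rparr>)) = npowers (Hgrp T p f A) n"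
proof -
  have "Hmap T p f A id ` carrier (Hgrp T p f (A\<lparr>carrier := npowers A n\<rparr>))
      = (\<lambda>g. Kset T p f A #>\<^bsub>Ggrp T p f A\<^esub> g) ` (\<lambda>g. g [^]\<^bsub>Ggrp T p f A\<^esub> n) ` Gcar T p f A"
    unfolding Hsub(3)[OF npowers_subgroup[OF A]] Gnpow[OF ml] npowers_def[of "Ggrp T p f A"] Ggrp_simps(1) ..
  also have "\<dots> = (\<lambda>c. c [^]\<^bsub>Hgrp T p f A\<^esub> n) ` (\<lambda>g. Kset T p f A #>\<^bsub>Ggrp T p f A\<^esub> g) ` Gcar T p f A"
    unfolding image_image by (rule image_cong) (simp_all add: Hpow)
  also have "\<dots> = npowers (Hgrp T p f A) n" unfolding npowers_def[of "Hgrp T p f A"] Hcar ..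
  finally show ?thesis .
qed

end




locale Qsetup = Msetup +
  fixes B
  assumes B: "subgroup B A"
begin

interpretation A: comm_group A by (rule A)
interpretation GG: comm_group "Ggrp T p f A" by (rule A.Ggrp_comm_group)

lemma Qcg: "comm_group (A Mod B)" by (rule A.abelian_FactGroup[OF B])
lemma phom: "(\<lambda>a. B #>\<^bsub>A\<^esub> a) \<in> hom A (A Mod B)"
  by (rule normal.r_coset_hom_Mod[OF A.subgroup_imp_normal[OF B]])
lemma psur: "(\<lambda>a. B #>\<^bsub>A\<^esub> a) ` carrier A = carrier (A Mod B)"
  by (simp add: carrier_FactGroup)

interpretation GQ: comm_group "Ggrp T p f (A Mod B)" by (rule comm_group.Ggrp_comm_group[OF Qcg])

lemma Gq_hom: "Gmap (\<lambda>a. B #>\<^bsub>A\<^esub> a) \<in> hom (Ggrp T p f A) (Ggrp T p f (A Mod B))"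
  by (rule Gmap_hom[OF A Qcg phom])

lemma Gq_one:
  assumes g: "g \<in> Gcar T p f A"
  shows "Gmap (\<lambda>a. B #>\<^bsub>A\<^esub> a) g = \<one>\<^bsub>Ggrp T p f (A Mod B)\<^esub> \<longleftrightarrow> (\<forall>m y. g m y \<in> B)"
proof -
  have "Gmap (\<lambda>a. B #>\<^bsub>A\<^esub> a) g = \<one>\<^bsub>Ggrp T p f (A Mod B)\<^esub> \<longleftrightarrow> (\<forall>m y. B #>\<^bsub>A\<^esub> g m y = B)"
    by (simp add: Gmap_def Ggrp_simps(3) fun_eq_iff)
  also have "\<dots> \<longleftrightarrow> (\<forall>m y. g m y \<in> B)"
    using A.rcos_eq_one_iff[OF B GcarD2[OF g]] by simp
  finally show ?thesis .
qed

lemma Gq_kernel: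
  "kernel (Ggrp T p f A) (Ggrp T p f (A Mod B)) (Gmap (\<lambda>a. B #>\<^bsub>A\<^esub> a)) = Gcar T p f (A\<lparr>carrier := B\<rparr>)"
  unfolding kernel_def Gcar_sub[OF A B] Ggrp_simps(1) by (auto simp: Gq_one)

lemma Gq_surj:
  assumes ml: "mittag_leffler T f"
  shows "Gmap (\<lambda>a. B #>\<^bsub>A\<^esub> a) ` Gcar T p f A = Gcar T p f (A Mod B)"
  by (rule MLsetup.Gsurj[OF MLsetup.intro[OF tw ml A Qcg phom psur]])

lemma KQ: "subgroup (Kset T p f (A Mod B)) (Ggrp T p f (A Mod B))"
  by (rule comm_group.Kset_subgroup[OF Qcg tw])

lemma hK: "Gmap (\<lambda>a. B #>\<^bsub>A\<^esub> a) ` Kset T p f A \<subseteq> Kset T p f (A Mod B)"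
proof
  fix x assume "x \<in> Gmap (\<lambda>a. B #>\<^bsub>A\<^esub> a) ` Kset T p f A"
  then obtain s where s: "s \<in> wedge (limcar T f) p A" and x: "x = Gmap (\<lambda>a. B #>\<^bsub>A\<^esub> a) (rho T p f A s)"
    by (auto simp: Kset_def)
  have "x = rho T p f (A Mod B) (\<lambda>y. B #>\<^bsub>A\<^esub> s y)" unfolding x by (rule rho_hom[OF A Qcg phom s])
  moreover have "(\<lambda>y. B #>\<^bsub>A\<^esub> s y) \<in> wedge (limcar T f) p (A Mod B)"
    by (rule push_hom(1)[OF A Qcg phom s])
  ultimately show "x \<in> Kset T p f (A Mod B)" unfolding Kset_def by blast
qed

interpretation F: Fsetup "Ggrp T p f A" "Ggrp T p f (A Mod B)" "Kset T p f A" "Kset T p f (A Mod B)"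
    "Gmap (\<lambda>a. B #>\<^bsub>A\<^esub> a)"
  by (rule Fsetup.intro[OF GG.comm_group_axioms GQ.comm_group_axioms KA KQ Gq_hom hK])

interpretation gh: group_hom "Ggrp T p f A" "Ggrp T p f (A Mod B)" "Gmap (\<lambda>a. B #>\<^bsub>A\<^esub> a)"
  using Gq_hom by (simp add: group_hom_def group_hom_axioms_def GG.is_group GQ.is_group)

lemma Hq_hom:
  "Hmap T p f (A Mod B) (\<lambda>a. B #>\<^bsub>A\<^esub> a) \<in> hom (Hgrp T p f A) (Hgrp T p f (A Mod B))"
  unfolding Hmap_eq Hgrp_def by (rule F.F_hom)

lemma Hq_coset:
  assumes g: "g \<in> Gcar T p f A"
  shows "Hmap T p f (A Mod B) (\<lambda>a. B #>\<^bsub>A\<^esub> a) (Kset T p f A #>\<^bsub>Ggrp T p f A\<^esub> g)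
       = Kset T p f (A Mod B) #>\<^bsub>Ggrp T p f (A Mod B)\<^esub> Gmap (\<lambda>a. B #>\<^bsub>A\<^esub> a) g"
  unfolding Hmap_eq by (rule F.F_coset) (use g in \<open>simp add: Ggrp_simps(1)\<close>)

lemma Hq_surj:
  assumes ml: "mittag_leffler T f"
  shows "Hmap T p f (A Mod B) (\<lambda>a. B #>\<^bsub>A\<^esub> a) ` carrier (Hgrp T p f A) = carrier (Hgrp T p f (A Mod B))"
proof -
  have "carrier (Hgrp T p f (A Mod B))
      = (\<lambda>x. Kset T p f (A Mod B) #>\<^bsub>Ggrp T p f (A Mod B)\<^esub> x) ` Gcar T p f (A Mod B)"
    by (simp add: Hgrp_def carrier_FactGroup Ggrp_simps(1))
  also have "\<dots> = (\<lambda>x. Kset T p f (A Mod B) #>\<^bsub>Ggrp T p f (A Mod B)\<^esub> x) ` Gmap (\<lambda>a. B #>\<^bsub>A\<^esub> a) ` Gcar T p f A"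
    by (simp only: Gq_surj[OF ml])
  also have "\<dots> = Hmap T p f (A Mod B) (\<lambda>a. B #>\<^bsub>A\<^esub> a) ` carrier (Hgrp T p f A)"
    unfolding Hmap_eq Hgrp_def F.F_image image_image Ggrp_simps(1) ..
  finally show ?thesis by simp
qed

lemma Hq_kernel:
  "kernel (Hgrp T p f A) (Hgrp T p f (A Mod B)) (Hmap T p f (A Mod B) (\<lambda>a. B #>\<^bsub>A\<^esub> a))
     = Hmap T p f A id ` carrier (Hgrp T p f (A\<lparr>carrier := B\<rparr>))"
  unfolding Hsub(3)[OF B]
proof (intro equalityI subsetI)
  fix c assume "c \<in> kernel (Hgrp T p f A) (Hgrp T p f (A Mod B)) (Hmap T p f (A Mod B) (\<lambda>a. B #>\<^bsub>A\<^esub> a))"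
  then have cc: "c \<in> carrier (Hgrp T p f A)"
    and c1: "Hmap T p f (A Mod B) (\<lambda>a. B #>\<^bsub>A\<^esub> a) c = Kset T p f (A Mod B)"
    by (auto simp: kernel_def Hgrp_def)
  obtain g where g: "g \<in> Gcar T p f A" and c: "c = Kset T p f A #>\<^bsub>Ggrp T p f A\<^esub> g"
    using cc unfolding Hcar by blast
  have gc: "g \<in> carrier (Ggrp T p f A)" using g by (simp add: Ggrp_simps(1))
  have hgc: "Gmap (\<lambda>a. B #>\<^bsub>A\<^esub> a) g \<in> carrier (Ggrp T p f (A Mod B))" using gc by simp
  have "Kset T p f (A Mod B) #>\<^bsub>Ggrp T p f (A Mod B)\<^esub> Gmap (\<lambda>a. B #>\<^bsub>A\<^esub> a) g = Kset T p f (A Mod B)"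
    using c1 unfolding c Hq_coset[OF g] .
  then have "Gmap (\<lambda>a. B #>\<^bsub>A\<^esub> a) g \<in> Kset T p f (A Mod B)"
    using GQ.rcos_eq_one_iff[OF KQ hgc] by simp
  then obtain s' where s': "s' \<in> wedge (limcar T f) p (A Mod B)"
    and gs: "Gmap (\<lambda>a. B #>\<^bsub>A\<^esub> a) g = rho T p f (A Mod B) s'"
    by (auto simp: Kset_def)
  obtain s where s: "s \<in> wedge (limcar T f) p A" and ss: "(\<lambda>y. B #>\<^bsub>A\<^esub> s y) = s'"
    using lift_wedge[OF A Qcg phom psur s'] by blast
  define r where "r = rho T p f A s"
  have rK: "r \<in> Kset T p f A" unfolding r_def Kset_def using s by (rule imageI)
  have rc: "r \<in> carrier (Ggrp T p f A)" using rK KA subgroup.mem_carrier by metis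
  have hr: "Gmap (\<lambda>a. B #>\<^bsub>A\<^esub> a) r = Gmap (\<lambda>a. B #>\<^bsub>A\<^esub> a) g"
    unfolding r_def rho_hom[OF A Qcg phom s] ss gs ..
  define g' where "g' = g \<otimes>\<^bsub>Ggrp T p f A\<^esub> inv\<^bsub>Ggrp T p f A\<^esub> r"
  have g'c: "g' \<in> carrier (Ggrp T p f A)" unfolding g'_def using gc rc by simp
  have "Gmap (\<lambda>a. B #>\<^bsub>A\<^esub> a) g' = \<one>\<^bsub>Ggrp T p f (A Mod B)\<^esub>"
    unfolding g'_def using gc rc hgc by (simp add: hr)
  then have "\<forall>m y. g' m y \<in> B" using Gq_one g'c by (simp add: Ggrp_simps(1))
  then have g'B: "g' \<in> Gcar T p f (A\<lparr>carrier := B\<rparr>)"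
    unfolding Gcar_sub[OF A B] using g'c by (simp add: Ggrp_simps(1))
  have "c = Kset T p f A #>\<^bsub>Ggrp T p f A\<^esub> g'" unfolding c g'_def coset_shift[OF g rK] ..
  then show "c \<in> (\<lambda>g. Kset T p f A #>\<^bsub>Ggrp T p f A\<^esub> g) ` Gcar T p f (A\<lparr>carrier := B\<rparr>)"
    using g'B by blast
next
  fix c assume "c \<in> (\<lambda>g. Kset T p f A #>\<^bsub>Ggrp T p f A\<^esub> g) ` Gcar T p f (A\<lparr>carrier := B\<rparr>)"
  then obtain g where gB: "g \<in> Gcar T p f (A\<lparr>carrier := B\<rparr>)" and c: "c = Kset T p f A #>\<^bsub>Ggrp T p f A\<^esub> g"
    by blast
  have g: "g \<in> Gcar T p f A" and gv: "\<forall>m y. g m y \<in> B" using gB unfolding Gcar_sub[OF A B] by auto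
  have cc: "c \<in> carrier (Hgrp T p f A)" unfolding Hcar c using g by blast
  have "Gmap (\<lambda>a. B #>\<^bsub>A\<^esub> a) g = \<one>\<^bsub>Ggrp T p f (A Mod B)\<^esub>" using Gq_one[OF g] gv by simp
  then have "Hmap T p f (A Mod B) (\<lambda>a. B #>\<^bsub>A\<^esub> a) c = Kset T p f (A Mod B)"
    unfolding c Hq_coset[OF g] using subgroup.subset[OF KQ] by simp
  then show "c \<in> kernel (Hgrp T p f A) (Hgrp T p f (A Mod B)) (Hmap T p f (A Mod B) (\<lambda>a. B #>\<^bsub>A\<^esub> a))"
    using cc by (simp add: kernel_def Hgrp_def)
qed

end

theorem mainTheorem13:
  fixes T :: "nat \<Rightarrow> 'x set" and p :: "nat \<Rightarrow> 'x" and f :: "nat \<Rightarrow> 'x \<Rightarrow> 'x"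
    and A :: "('a, 'b) monoid_scheme" and B :: "'a set"
  assumes "tower T p f" and "comm_group A" and "subgroup B A"
  shows
    \<comment> \<open>H-version\<close>
    "(Hmap T p f A id \<in> hom (Hgrp T p f (A\<lparr>carrier := B\<rparr>)) (Hgrp T p f A)
      \<and> inj_on (Hmap T p f A id) (carrier (Hgrp T p f (A\<lparr>carrier := B\<rparr>))))
   \<and> (\<forall>n::nat. n \<ge> 1 \<longrightarrow>
        Hmap T p f A id \<in> hom (Hgrp T p f (A\<lparr>carrier := torsion A n\<rparr>)) (Hgrp T p f A)
      \<and> bij_betw (Hmap T p f A id) (carrier (Hgrp T p f (A\<lparr>carrier := torsion A n\<rparr>)))
                 (torsion (Hgrp T p f A) n))
   \<and> (mittag_leffler T f \<longrightarrow>
        (Hmap T p f (A Mod B) (\<lambda>a. B #>\<^bsub>A\<^esub> a) \<in> hom (Hgrp T p f A) (Hgrp T p f (A Mod B))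
         \<and> Hmap T p f (A Mod B) (\<lambda>a. B #>\<^bsub>A\<^esub> a) ` carrier (Hgrp T p f A)
             = carrier (Hgrp T p f (A Mod B))
         \<and> kernel (Hgrp T p f A) (Hgrp T p f (A Mod B)) (Hmap T p f (A Mod B) (\<lambda>a. B #>\<^bsub>A\<^esub> a))
             = Hmap T p f A id ` carrier (Hgrp T p f (A\<lparr>carrier := B\<rparr>)))
      \<and> (\<forall>n::nat. n \<ge> 1 \<longrightarrow>
          Hmap T p f A id \<in> hom (Hgrp T p f (A\<lparr>carrier := npowers A n\<rparr>)) (Hgrp T p f A)
        \<and> bij_betw (Hmap T p f A id) (carrier (Hgrp T p f (A\<lparr>carrier := npowers A n\<rparr>)))
                   (npowers (Hgrp T p f A) n)))
   \<comment> \<open>G-version (inclusion is the identity on sequences)\<close>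
   \<and> (id \<in> hom (Ggrp T p f (A\<lparr>carrier := B\<rparr>)) (Ggrp T p f A)
      \<and> inj_on id (carrier (Ggrp T p f (A\<lparr>carrier := B\<rparr>))))
   \<and> (\<forall>n::nat. n \<ge> 1 \<longrightarrow>
        id \<in> hom (Ggrp T p f (A\<lparr>carrier := torsion A n\<rparr>)) (Ggrp T p f A)
      \<and> bij_betw id (carrier (Ggrp T p f (A\<lparr>carrier := torsion A n\<rparr>)))
                 (torsion (Ggrp T p f A) n))
   \<and> (mittag_leffler T f \<longrightarrow>
        (Gmap (\<lambda>a. B #>\<^bsub>A\<^esub> a) \<in> hom (Ggrp T p f A) (Ggrp T p f (A Mod B))
         \<and> Gmap (\<lambda>a. B #>\<^bsub>A\<^esub> a) ` carrier (Ggrp T p f A) = carrier (Ggrp T p f (A Mod B))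
         \<and> kernel (Ggrp T p f A) (Ggrp T p f (A Mod B)) (Gmap (\<lambda>a. B #>\<^bsub>A\<^esub> a))
             = carrier (Ggrp T p f (A\<lparr>carrier := B\<rparr>)))
      \<and> (\<forall>n::nat. n \<ge> 1 \<longrightarrow>
          id \<in> hom (Ggrp T p f (A\<lparr>carrier := npowers A n\<rparr>)) (Ggrp T p f A)
        \<and> bij_betw id (carrier (Ggrp T p f (A\<lparr>carrier := npowers A n\<rparr>)))
                   (npowers (Ggrp T p f A) n)))"

proof -
  interpret Q: Qsetup T p f A B using assms by (simp add: Qsetup_def Qsetup_axioms_def Msetup_def)
  have A: "comm_group A" and B: "subgroup B A" and tw: "tower T p f" using assms by auto
  have idhom: "id \<in> hom (Ggrp T p f (A\<lparr>carrier := C\<rparr>)) (Ggrp T p f A)" if C: "subgroup C A" for C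
    using Gmap_hom[OF sub_comm_group[OF A C] A sub_hom[OF C], of T p f] unfolding Gmap_id .
  have TS: "subgroup (torsion A n) A" for n by (rule torsion_subgroup[OF A])
  have NS: "subgroup (npowers A n) A" for n by (rule npowers_subgroup[OF A])
  show ?thesis
  proof (intro conjI allI impI)
    show "Hmap T p f A id \<in> hom (Hgrp T p f (A\<lparr>carrier := B\<rparr>)) (Hgrp T p f A)" by (rule Q.Hsub(1)[OF B])
    show "inj_on (Hmap T p f A id) (carrier (Hgrp T p f (A\<lparr>carrier := B\<rparr>)))" by (rule Q.Hsub(2)[OF B])
    fix n :: nat
    show "Hmap T p f A id \<in> hom (Hgrp T p f (A\<lparr>carrier := torsion A n\<rparr>)) (Hgrp T p f A)" by (rule Q.Hsub(1)[OF TS])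
    show "bij_betw (Hmap T p f A id) (carrier (Hgrp T p f (A\<lparr>carrier := torsion A n\<rparr>))) (torsion (Hgrp T p f A) n)"
      unfolding bij_betw_def using Q.Hsub(2)[OF TS] Q.Htors by blast
  next
    assume ml: "mittag_leffler T f"
    show "Hmap T p f (A Mod B) (\<lambda>a. B #>\<^bsub>A\<^esub> a) \<in> hom (Hgrp T p f A) (Hgrp T p f (A Mod B))" by (rule Q.Hq_hom)
    show "Hmap T p f (A Mod B) (\<lambda>a. B #>\<^bsub>A\<^esub> a) ` carrier (Hgrp T p f A) = carrier (Hgrp T p f (A Mod B))"
      by (rule Q.Hq_surj[OF ml])
    show "kernel (Hgrp T p f A) (Hgrp T p f (A Mod B)) (Hmap T p f (A Mod B) (\<lambda>a. B #>\<^bsub>A\<^esub> a))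
             = Hmap T p f A id ` carrier (Hgrp T p f (A\<lparr>carrier := B\<rparr>))" by (rule Q.Hq_kernel)
    fix n :: nat
    show "Hmap T p f A id \<in> hom (Hgrp T p f (A\<lparr>carrier := npowers A n\<rparr>)) (Hgrp T p f A)" by (rule Q.Hsub(1)[OF NS])
    show "bij_betw (Hmap T p f A id) (carrier (Hgrp T p f (A\<lparr>carrier := npowers A n\<rparr>))) (npowers (Hgrp T p f A) n)"
      unfolding bij_betw_def using Q.Hsub(2)[OF NS] Q.Hnpow[OF ml] by blast
  next
    show "id \<in> hom (Ggrp T p f (A\<lparr>carrier := B\<rparr>)) (Ggrp T p f A)" by (rule idhom[OF B])
    show "inj_on id (carrier (Ggrp T p f (A\<lparr>carrier := B\<rparr>)))" by simp
    fix n :: nat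
    show "id \<in> hom (Ggrp T p f (A\<lparr>carrier := torsion A n\<rparr>)) (Ggrp T p f A)" by (rule idhom[OF TS])
    show "bij_betw id (carrier (Ggrp T p f (A\<lparr>carrier := torsion A n\<rparr>))) (torsion (Ggrp T p f A) n)"
      unfolding Ggrp_simps(1) Q.Gtors by (rule bij_betw_id)
  next
    assume ml: "mittag_leffler T f"
    show "Gmap (\<lambda>a. B #>\<^bsub>A\<^esub> a) \<in> hom (Ggrp T p f A) (Ggrp T p f (A Mod B))" by (rule Q.Gq_hom)
    show "Gmap (\<lambda>a. B #>\<^bsub>A\<^esub> a) ` carrier (Ggrp T p f A) = carrier (Ggrp T p f (A Mod B))"
      unfolding Ggrp_simps(1) by (rule Q.Gq_surj[OF ml])
    show "kernel (Ggrp T p f A) (Ggrp T p f (A Mod B)) (Gmap (\<lambda>a. B #>\<^bsub>A\<^esub> a))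
             = carrier (Ggrp T p f (A\<lparr>carrier := B\<rparr>))"
      unfolding Q.Gq_kernel Ggrp_simps(1) ..
    fix n :: nat
    show "id \<in> hom (Ggrp T p f (A\<lparr>carrier := npowers A n\<rparr>)) (Ggrp T p f A)" by (rule idhom[OF NS])
    show "bij_betw id (carrier (Ggrp T p f (A\<lparr>carrier := npowers A n\<rparr>))) (npowers (Ggrp T p f A) n)"
      unfolding Ggrp_simps(1) Q.Gnpow[OF ml] by (rule bij_betw_id)
  qed
qed


end
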